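(* Let $n\in\mathbb{N}^*$, $\mu>0$, $\lambda>0$. Let $Y^s$ have the gamma law with density $\frac{\mu^n}{(n-1)!}t^{n-1}e^{-\mu t}$ on $(0,\infty)$, let $Y^d$ have the exponential law with parameter $\lambda$, and let $(C_i)_{i\ge1}$ be i.i.d. copies of a random variable $C$ with $\mathbb{P}(C>0)=1$ and $\mathbb{E}[C^2]<\infty$, with $Y^s$, $Y^d$, $(C_i)$ mutually independent. Let $L(s)=\mathbb{E}[e^{-sC}]$, $D_0=0$, $D_k=C_1+\dots+C_k$, $\overline{B}(t)=\inf\{k\ge1:D_k\ge t\}$, $K^r=\overline{B}(Y^s)$, $V^s=D_{K^r}$, $Z^d=Y^s+Y^d$, $P_d=\mathbb{P}(V^s\ge Z^d)$. Then $$\mathbb{E}[K^r]=\sum_{i=0}^{n-1}\frac{\mu^i}{i!}(-1)^i\Big(\frac{1}{1-L}\Big)^{(i)}(\mu),$$ and $$1-P_d=\begin{cases}\dfrac{\mu^n}{(\mu-\lambda)^n}\Big(L(\lambda)-(1-L(\lambda))\displaystyle\sum_{i=0}^{n-1}\frac{(\mu-\lambda)^i}{i!}(-1)^i\Big(\frac{L}{1-L}\Big)^{(i)}(\mu)\Big) & \text{if }\lambda\ne\mu,\\[2ex] (1-L(\mu))\dfrac{\mu^n}{n!}(-1)^n\Big(\dfrac{L}{1-L}\Big)^{(n)}(\mu) & \text{if }\lambda=\mu,\end{cases}$$ where $F^{(i)}$ denotes the $i$-th derivative of a function $F$.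
   Context: $Y^s$ is the time to damage, $Y^d$ the time from damage to failure, $D_k$ the time of the $k$-th inspection, $K^r$ the index of the first inspection at or after the damage, and $P_d$ the probability that the failure occurs no later than the inspection detecting the damage. *)

theory Defs
  imports "HOL-Probability.Probability"
begin

definition insp_time :: "(nat \<Rightarrow> 'a \<Rightarrow> real) \<Rightarrow> nat \<Rightarrow> 'a \<Rightarrow> real" where
  "insp_time C k \<omega> = (\<Sum>i=1..k. C i \<omega>)"

definition Bbar :: "(nat \<Rightarrow> 'a \<Rightarrow> real) \<Rightarrow> real \<Rightarrow> 'a \<Rightarrow> nat" where
  "Bbar C t \<omega> = (LEAST k. 1 \<le> k \<and> t \<le> insp_time C k \<omega>)"

end

theory Submission
  imports Defs
begin


lemma pow_fact_le_exp:
  fixes x :: real assumes "0 \<le> x" shows "x ^ k / fact k \<le> exp x"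
proof -
  have s: "(\<lambda>n. x ^ n /\<^sub>R fact n) sums exp x" by (rule exp_converges)
  have "sum (\<lambda>n. x ^ n /\<^sub>R fact n) {k} \<le> suminf (\<lambda>n. x ^ n /\<^sub>R fact n)"
    by (rule sum_le_suminf) (use s assms in \<open>auto simp: sums_iff\<close>)
  thus ?thesis using s by (simp add: sums_iff divide_inverse_commute)
qed

lemma pow_exp_bound:
  fixes x s :: real assumes "0 \<le> x" "0 < s"
  shows "x ^ k * exp (- s * x) \<le> fact k * (2 / s) ^ k * exp (- (s/2) * x)"
proof -
  have "(s/2 * x) ^ k / fact k \<le> exp (s/2 * x)" using assms by (intro pow_fact_le_exp) auto
  hence "(s/2 * x) ^ k \<le> fact k * exp (s/2 * x)"
    by (simp add: divide_le_eq mult.commute)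
  hence "(2/s)^k * (s/2 * x) ^ k \<le> (2/s)^k * (fact k * exp (s/2 * x))"
    using assms by (intro mult_left_mono) auto
  moreover have "(2/s)^k * (s/2 * x) ^ k = x ^ k"
    using assms by (simp add: power_mult_distrib[symmetric])
  ultimately have "x ^ k \<le> fact k * (2/s) ^ k * exp (s/2 * x)" by (simp add: ac_simps)
  hence "x ^ k * exp (- s * x) \<le> fact k * (2/s) ^ k * exp (s/2 * x) * exp (- s * x)"
    by (intro mult_right_mono) auto
  also have "\<dots> = fact k * (2 / s) ^ k * exp (- (s/2) * x)"
    by (simp add: mult.assoc exp_add[symmetric])
  finally show ?thesis .
qed


lemma pow_exp_bound2:
  fixes x s :: real assumes "0 \<le> x" "0 < s"
  shows "x ^ k * exp (- s * x) \<le> fact k * (2 / s) ^ k"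
proof -
  have "x ^ k * exp (- s * x) \<le> fact k * (2 / s) ^ k * exp (- (s/2) * x)"
    by (rule pow_exp_bound[OF assms])
  also have "\<dots> \<le> fact k * (2 / s) ^ k * 1"
    using assms by (intro mult_left_mono) auto
  finally show ?thesis by simp
qed

definition Tsum :: "nat \<Rightarrow> real \<Rightarrow> real \<Rightarrow> real" where
  "Tsum n v y = (\<Sum>i<n. (v * y) ^ i / fact i)"

lemma Tsum_deriv: "(Tsum (Suc m) v has_real_derivative v * Tsum m v y) (at y)"
proof (induction m)
  case 0 show ?case by (simp add: Tsum_def)
next
  case (Suc m)
  have e: "Tsum (Suc (Suc m)) v = (\<lambda>y. Tsum (Suc m) v y + (v * y)^(Suc m) / fact (Suc m))"
    by (simp add: Tsum_def fun_eq_iff)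
  have d0: "((\<lambda>y. v^(Suc m)/fact (Suc m) * y^(Suc m)) has_real_derivative
      v^(Suc m)/fact (Suc m) * (real (Suc m) * y^(Suc m - Suc 0))) (at y)"
    by (intro DERIV_cmult DERIV_pow)
  have f: "(\<lambda>y. v^(Suc m)/fact (Suc m) * y^(Suc m)) = (\<lambda>y. (v * y)^(Suc m) / fact (Suc m))"
    by (simp add: fun_eq_iff power_mult_distrib)
  have e2: "v^(Suc m)/fact (Suc m) * (real (Suc m) * y^(Suc m - Suc 0)) = v * ((v * y)^m / fact m)"
    by (simp add: fact_Suc power_mult_distrib)
  have d': "((\<lambda>y. (v * y)^(Suc m) / fact (Suc m)) has_real_derivative v * ((v * y)^m / fact m)) (at y)"
    using d0 unfolding f e2 .
  have "(Tsum (Suc (Suc m)) v has_real_derivative v * Tsum m v y + v * ((v * y)^m / fact m)) (at y)"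
    unfolding e by (intro DERIV_add Suc d')
  moreover have "v * Tsum m v y + v * ((v * y)^m / fact m) = v * Tsum (Suc m) v y"
    by (simp add: Tsum_def distrib_left)
  ultimately show ?case by simp
qed

lemma expTsum_deriv:
  assumes "n \<ge> 1"
  shows "((\<lambda>y. exp (- v * y) * Tsum n v y) has_real_derivative
           - (v ^ n * y ^ (n - 1) / fact (n - 1) * exp (- v * y))) (at y)"
proof -
  obtain m where n: "n = Suc m" using assms by (cases n) auto
  have "((\<lambda>y. exp (- v * y) * Tsum n v y) has_real_derivative
       exp (- v * y) * (- v) * Tsum n v y + exp (- v * y) * (v * Tsum m v y)) (at y)"
    unfolding n by (auto intro!: derivative_eq_intros Tsum_deriv)
  moreover have "Tsum n v y = Tsum m v y + (v * y)^m / fact m" unfolding n by (simp add: Tsum_def)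
  ultimately have "((\<lambda>y. exp (- v * y) * Tsum n v y) has_real_derivative
       - (exp (- v * y) * v * ((v * y)^m / fact m))) (at y)"
    by (simp add: algebra_simps)
  moreover have "exp (- v * y) * v * ((v * y)^m / fact m) = v ^ n * y ^ (n - 1) / fact (n - 1) * exp (- v * y)"
    unfolding n by (simp add: power_mult_distrib)
  ultimately show ?thesis by simp
qed


lemma ps_higher_deriv:
  fixes b :: "nat \<Rightarrow> nat \<Rightarrow> real" and c R :: real
  assumes nonneg: "\<And>i j. 0 \<le> b i j"
    and summ: "\<And>i K. 0 \<le> K \<Longrightarrow> K < R \<Longrightarrow> summable (\<lambda>j. b i j * K ^ j)"
    and dif: "\<And>i. diffs (b i) = b (Suc i)"
    and s: "s \<in> ball c R"
  shows "(deriv ^^ i) (\<lambda>s. \<Sum>j. b 0 j * (c - s) ^ j) s = (-1) ^ i * (\<Sum>j. b i j * (c - s) ^ j)"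
  using s
proof (induction i arbitrary: s)
  case 0 then show ?case by simp
next
  case (Suc i)
  have sa: "summable (\<lambda>j. b i j * x ^ j)" if "\<bar>x\<bar> < R" for i x
  proof -
    have "summable (\<lambda>j. b i j * \<bar>x\<bar> ^ j)" using that by (intro summ) auto
    hence "summable (\<lambda>j. \<bar>b i j * x ^ j\<bar>)" using nonneg by (simp add: abs_mult power_abs)
    thus ?thesis by (rule summable_rabs_cancel)
  qed
  have der: "((\<lambda>s. \<Sum>j. b i j * (c - s) ^ j) has_real_derivative
        - (\<Sum>j. b (Suc i) j * (c - s) ^ j)) (at s)" if "s \<in> ball c R" for i s
  proof -
    define K where "K = (\<bar>c - s\<bar> + R) / 2"
    have K: "\<bar>c - s\<bar> < K" "K < R" "0 \<le> K" using that by (auto simp: K_def dist_real_def)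
    have "((\<lambda>x. \<Sum>j. b i j * x ^ j) has_real_derivative (\<Sum>j. diffs (b i) j * (c - s) ^ j)) (at (c - s))"
      by (rule termdiffs_strong[where K=K]) (use K sa in auto)
    hence d1: "((\<lambda>x. \<Sum>j. b i j * x ^ j) has_real_derivative (\<Sum>j. b (Suc i) j * (c - s) ^ j)) (at (c - s))"
      by (simp add: dif)
    have d2: "((\<lambda>s. c - s) has_real_derivative -1) (at s)"
      by (auto intro!: derivative_eq_intros)
    from DERIV_chain2[OF d1 d2] show ?thesis by simp
  qed
  have ev: "\<forall>\<^sub>F x in nhds s. (deriv ^^ i) (\<lambda>s. \<Sum>j. b 0 j * (c - s) ^ j) x
              = (-1) ^ i * (\<Sum>j. b i j * (c - x) ^ j)"
    using eventually_nhds_in_open[OF open_ball Suc.prems] by eventually_elim (rule Suc.IH)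
  have "(deriv ^^ Suc i) (\<lambda>s. \<Sum>j. b 0 j * (c - s) ^ j) s
        = deriv (\<lambda>x. (-1) ^ i * (\<Sum>j. b i j * (c - x) ^ j)) s"
    by (simp only: funpow.simps comp_def) (rule deriv_cong_ev[OF ev refl])
  also have "\<dots> = (-1) ^ i * (- (\<Sum>j. b (Suc i) j * (c - s) ^ j))"
    by (rule DERIV_imp_deriv, rule DERIV_cmult, rule der[OF Suc.prems])
  finally show ?case by simp
qed


lemma indep_blocks:
  assumes P: "prob_space M" and ind: "prob_space.indep_vars M (\<lambda>_. borel) X I"
    and AB: "A \<inter> B = {}" "A \<subseteq> I" "B \<subseteq> I"
    and F: "F \<in> borel_measurable (PiM A (\<lambda>_. borel))" and G: "G \<in> borel_measurable (PiM B (\<lambda>_. borel))"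
    and U: "\<And>\<omega>. U \<omega> = F (restrict (\<lambda>i. X i \<omega>) A)" and V: "\<And>\<omega>. V \<omega> = G (restrict (\<lambda>i. X i \<omega>) B)"
  shows "prob_space.indep_var M borel U borel V"
proof -
  interpret prob_space M by fact
  have "indep_var (PiM A (\<lambda>_. borel)) (\<lambda>\<omega>. restrict (\<lambda>i. X i \<omega>) A) (PiM B (\<lambda>_. borel)) (\<lambda>\<omega>. restrict (\<lambda>i. X i \<omega>) B)"
    by (rule indep_var_restrict[OF ind AB])
  from indep_var_compose[OF this F G]
  have "indep_var borel (F \<circ> (\<lambda>\<omega>. restrict (\<lambda>i. X i \<omega>) A)) borel (G \<circ> (\<lambda>\<omega>. restrict (\<lambda>i. X i \<omega>) B))" .
  moreover have "U = F \<circ> (\<lambda>\<omega>. restrict (\<lambda>i. X i \<omega>) A)" "V = G \<circ> (\<lambda>\<omega>. restrict (\<lambda>i. X i \<omega>) B)"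
    using U V by (auto simp: fun_eq_iff)
  ultimately show ?thesis by simp
qed

lemma indep_fubini:
  fixes U :: "'a \<Rightarrow> 'b::topological_space" and V :: "'a \<Rightarrow> 'b"
  assumes P: "prob_space M" and ind: "prob_space.indep_var M borel U borel V"
    and f: "f \<in> borel_measurable (borel \<Otimes>\<^sub>M borel)"
  shows "(\<integral>\<^sup>+\<omega>. f (U \<omega>, V \<omega>) \<partial>M) = (\<integral>\<^sup>+\<omega>. (\<integral>\<^sup>+\<omega>'. f (U \<omega>, V \<omega>') \<partial>M) \<partial>M)"
proof -
  interpret prob_space M by fact
  have rU[measurable]: "U \<in> borel_measurable M" and rV[measurable]: "V \<in> borel_measurable M"
    and eq: "distr M borel U \<Otimes>\<^sub>M distr M borel V = distr M (borel \<Otimes>\<^sub>M borel) (\<lambda>x. (U x, V x))"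
    using ind by (auto simp: indep_var_distribution_eq)
  interpret pV: prob_space "distr M borel V" by (rule prob_space_distr) simp
  note f[measurable]
  have "(\<integral>\<^sup>+\<omega>. f (U \<omega>, V \<omega>) \<partial>M) = (\<integral>\<^sup>+z. f z \<partial>distr M (borel \<Otimes>\<^sub>M borel) (\<lambda>x. (U x, V x)))"
    by (subst nn_integral_distr) auto
  also have "\<dots> = (\<integral>\<^sup>+z. f z \<partial>(distr M borel U \<Otimes>\<^sub>M distr M borel V))"
    by (simp add: eq)
  also have "\<dots> = (\<integral>\<^sup>+x. \<integral>\<^sup>+y. f (x, y) \<partial>distr M borel V \<partial>distr M borel U)"
    by (rule pV.nn_integral_fst[symmetric]) simp
  also have "\<dots> = (\<integral>\<^sup>+\<omega>. \<integral>\<^sup>+y. f (U \<omega>, y) \<partial>distr M borel V \<partial>M)"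
    by (subst nn_integral_distr) (auto intro!: pV.borel_measurable_nn_integral_fst)
  also have "\<dots> = (\<integral>\<^sup>+\<omega>. (\<integral>\<^sup>+\<omega>'. f (U \<omega>, V \<omega>') \<partial>M) \<partial>M)"
    by (intro nn_integral_cong, subst nn_integral_distr) auto
  finally show ?thesis .
qed


locale model = prob_space M for M :: "'a measure" +
  fixes n :: nat and mu lam :: real and Y Yd :: "'a \<Rightarrow> real" and C :: "nat \<Rightarrow> 'a \<Rightarrow> real"
  assumes n1: "n \<ge> 1" and mu: "mu > 0" and lam: "lam > 0"
    and Ydist: "distributed M lborel Y (\<lambda>x. ennreal (erlang_density (n - 1) mu x))"
    and Yddist: "distributed M lborel Yd (\<lambda>x. ennreal (exponential_density lam x))"
    and Cmeas[measurable]: "\<And>i. C i \<in> borel_measurable M"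
    and Cpos: "\<And>i \<omega>. 0 < C i \<omega>"
    and Cdist: "\<And>i. i \<ge> 1 \<Longrightarrow> distr M borel (C i) = distr M borel (C 1)"
    and indep: "indep_vars (\<lambda>_. borel) (\<lambda>j. case j of Inl b \<Rightarrow> (if b then Y else Yd) | Inr i \<Rightarrow> C i)
           (range Inl \<union> Inr ` {1..})"
begin

abbreviation "XX \<equiv> (\<lambda>j. case j of Inl b \<Rightarrow> (if b then Y else Yd) | Inr i \<Rightarrow> C i)"
abbreviation "II \<equiv> (range Inl \<union> Inr ` {1::nat..}) :: (bool + nat) set"

definition D :: "nat \<Rightarrow> 'a \<Rightarrow> real" where "D k \<omega> = insp_time C k \<omega>"
definition LL :: "real \<Rightarrow> real" where "LL s = expectation (\<lambda>\<omega>. exp (- s * C 1 \<omega>))"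

lemma Ymeas[measurable]: "Y \<in> borel_measurable M"
  using Ydist by (simp add: distributed_def)
lemma Ydmeas[measurable]: "Yd \<in> borel_measurable M"
  using Yddist by (simp add: distributed_def)

lemma D_eq: "D k = (\<lambda>\<omega>. \<Sum>i\<in>{1..k}. C i \<omega>)"
  by (simp add: D_def insp_time_def fun_eq_iff)

lemma D_meas[measurable]: "D k \<in> borel_measurable M"
  unfolding D_eq by measurable

lemma D_0[simp]: "D 0 \<omega> = 0" by (simp add: D_eq)
lemma D_Suc: "D (Suc k) \<omega> = D k \<omega> + C (Suc k) \<omega>" by (simp add: D_eq)
lemma D_nonneg: "0 \<le> D k \<omega>"
  unfolding D_eq by (intro sum_nonneg) (simp add: less_imp_le Cpos)
lemma D_strict: "j < k \<Longrightarrow> D j \<omega> < D k \<omega>"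
proof (induction k)
  case 0 then show ?case by simp
next
  case (Suc k) then show ?case using Cpos[of "Suc k" \<omega>]
    by (cases "j = k") (auto simp: D_Suc)
qed
lemma D_mono: "j \<le> k \<Longrightarrow> D j \<omega> \<le> D k \<omega>"
  using D_strict[of j k \<omega>] by (cases "j = k") auto

lemma meas_sum_comp: "(\<lambda>x::bool+nat\<Rightarrow>real. \<Sum>i\<in>{1..k}. x (Inr i)) \<in> borel_measurable (PiM A (\<lambda>_. borel))"
  if "Inr ` {1..k} \<subseteq> A" for A :: "(bool + nat) set"
  apply (rule borel_measurable_sum[where f="\<lambda>i x. x (Inr i)"])
  apply (rule measurable_component_singleton)
  using that by auto

lemma indep_D_Y: "indep_var borel (D k) borel Y"
  by (rule indep_blocks[OF prob_space_axioms indep, where A="Inr ` {1..k}" and B="{Inl True}"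
        and F="\<lambda>x. \<Sum>i\<in>{1..k}. x (Inr i)" and G="\<lambda>x. x (Inl True)"])
     (auto simp: D_eq intro!: meas_sum_comp measurable_component_singleton)

lemma indep_D_C: "indep_var borel (D k) borel (C (Suc k))"
  by (rule indep_blocks[OF prob_space_axioms indep, where A="Inr ` {1..k}" and B="{Inr (Suc k)}"
        and F="\<lambda>x. \<Sum>i\<in>{1..k}. x (Inr i)" and G="\<lambda>x. x (Inr (Suc k))"])
     (auto simp: D_eq intro!: meas_sum_comp measurable_component_singleton)

lemma indep_Y_Yd: "indep_var borel Y borel Yd"
  by (rule indep_blocks[OF prob_space_axioms indep, where A="{Inl True}" and B="{Inl False}"
        and F="\<lambda>x. x (Inl True)" and G="\<lambda>x. x (Inl False)"])
     (auto intro!: measurable_component_singleton)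

lemma indep_pair: "indep_var borel (\<lambda>\<omega>. (D k \<omega>, C (Suc k) \<omega>)) borel (\<lambda>\<omega>. (Y \<omega>, Yd \<omega>))"
proof (rule indep_blocks[OF prob_space_axioms indep, where A="Inr ` {1..Suc k}" and B="{Inl True, Inl False}"
        and F="\<lambda>x. (\<Sum>i\<in>{1..k}. x (Inr i), x (Inr (Suc k)))" and G="\<lambda>x. (x (Inl True), x (Inl False))"])
  show "(\<lambda>x::bool+nat\<Rightarrow>real. (\<Sum>i\<in>{1..k}. x (Inr i), x (Inr (Suc k)))) \<in> borel_measurable (PiM (Inr ` {1..Suc k}) (\<lambda>_. borel))"
    apply (rule borel_measurable_Pair)
    apply (rule meas_sum_comp) apply force
    apply (rule measurable_component_singleton) by auto
  show "(\<lambda>x::bool+nat\<Rightarrow>real. (x (Inl True), x (Inl False))) \<in> borel_measurable (PiM {Inl True, Inl False} (\<lambda>_. borel))"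
    unfolding borel_prod[symmetric] by (intro measurable_Pair measurable_component_singleton) auto
qed (auto simp: D_eq)

end


lemma ennreal_suminf_swap:
  fixes f :: "nat \<Rightarrow> nat \<Rightarrow> ennreal"
  shows "(\<Sum>k. \<Sum>j. f k j) = (\<Sum>j. \<Sum>k. f k j)"
proof -
  have "(\<Sum>k. \<Sum>j. f k j) = (\<integral>\<^sup>+k. (\<Sum>j. f k j) \<partial>count_space UNIV)"
    by (simp add: nn_integral_count_space_nat)
  also have "\<dots> = (\<Sum>j. \<integral>\<^sup>+k. f k j \<partial>count_space UNIV)"
    by (rule nn_integral_suminf) simp
  also have "\<dots> = (\<Sum>j. \<Sum>k. f k j)"
    by (simp add: nn_integral_count_space_nat)
  finally show ?thesis .
qed

context model begin

lemma exp_C_integrable: "0 \<le> s \<Longrightarrow> integrable M (\<lambda>\<omega>. exp (- s * C i \<omega>))"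
  by (rule integrable_const_bound[where B=1])
     (auto simp: Cpos less_imp_le mult_nonneg_nonneg)

lemma exp_D_integrable: "0 \<le> s \<Longrightarrow> integrable M (\<lambda>\<omega>. exp (- s * D k \<omega>))"
  by (rule integrable_const_bound[where B=1])
     (auto simp: D_nonneg mult_nonneg_nonneg)

lemma E_C_same:
  fixes g :: "real \<Rightarrow> real"
  assumes "i \<ge> 1" and g[measurable]: "g \<in> borel_measurable borel"
  shows "(\<integral>\<omega>. g (C i \<omega>) \<partial>M) = (\<integral>\<omega>. g (C 1 \<omega>) \<partial>M)"
proof -
  have "(\<integral>\<omega>. g (C i \<omega>) \<partial>M) = (\<integral>x. g x \<partial>distr M borel (C i))"
    by (subst integral_distr) auto
  also have "\<dots> = (\<integral>x. g x \<partial>distr M borel (C 1))" using Cdist[OF assms(1)] by simp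
  also have "\<dots> = (\<integral>\<omega>. g (C 1 \<omega>) \<partial>M)"
    by (subst integral_distr) auto
  finally show ?thesis .
qed

lemma LL_pow:
  assumes s: "0 \<le> s"
  shows "expectation (\<lambda>\<omega>. exp (- s * D k \<omega>)) = LL s ^ k"
proof -
  have ind: "indep_vars (\<lambda>_. borel) (\<lambda>j \<omega>. exp (- s * XX j \<omega>)) (Inr ` {1..k})"
  proof -
    have "indep_vars (\<lambda>_. borel) XX (Inr ` {1..k})"
      by (rule indep_vars_subset[OF indep]) auto
    thus ?thesis
      by (rule indep_vars_compose2[where Y="\<lambda>j x. exp (- s * x)"]) auto
  qed
  have "(\<lambda>\<omega>. exp (- s * D k \<omega>)) = (\<lambda>\<omega>. \<Prod>j\<in>Inr ` {1..k}. exp (- s * XX j \<omega>))"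
    by (simp add: D_eq fun_eq_iff sum_distrib_left exp_sum prod.reindex)
  moreover have "expectation (\<lambda>\<omega>. \<Prod>j\<in>Inr ` {1..k}. exp (- s * XX j \<omega>)) = (\<Prod>j\<in>Inr ` {1..k}. expectation (\<lambda>\<omega>. exp (- s * XX j \<omega>)))"
    by (rule indep_vars_lebesgue_integral[OF _ ind]) (use exp_C_integrable[OF s, simplified] in auto)
  ultimately have "expectation (\<lambda>\<omega>. exp (- s * D k \<omega>)) = (\<Prod>j\<in>Inr ` {1..k}. expectation (\<lambda>\<omega>. exp (- s * XX j \<omega>)))"
    by simp
  also have "\<dots> = (\<Prod>i\<in>{1..k}. expectation (\<lambda>\<omega>. exp (- s * C i \<omega>)))"
    by (simp add: prod.reindex)
  also have "\<dots> = (\<Prod>i\<in>{1..k}. LL s)"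
    unfolding LL_def by (intro prod.cong refl E_C_same) auto
  finally show ?thesis by simp
qed

lemma LL_nonneg: "0 \<le> LL s" unfolding LL_def by (intro integral_nonneg_AE) auto

lemma LL_less1: assumes "0 < s" shows "LL s < 1"
proof -
  have "LL s < expectation (\<lambda>\<omega>. 1)"
    unfolding LL_def
    by (rule integral_less_AE_space) (use assms Cpos exp_C_integrable[of s 1] in \<open>auto simp: emeasure_space_1\<close>)
  thus ?thesis by (simp add: prob_space)
qed

definition hh :: "nat \<Rightarrow> real \<Rightarrow> nat \<Rightarrow> ennreal" where
  "hh i s k = (\<integral>\<^sup>+\<omega>. ennreal (D k \<omega> ^ i * exp (- s * D k \<omega>)) \<partial>M)"

definition HH :: "nat \<Rightarrow> real \<Rightarrow> ennreal" where
  "HH i s = (\<Sum>k. hh i s k)"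

lemma hh0: assumes "0 \<le> s" shows "hh 0 s k = ennreal (LL s ^ k)"
proof -
  have "hh 0 s k = (\<integral>\<^sup>+\<omega>. ennreal (exp (- s * D k \<omega>)) \<partial>M)" by (simp add: hh_def)
  also have "\<dots> = ennreal (expectation (\<lambda>\<omega>. exp (- s * D k \<omega>)))"
    by (rule nn_integral_eq_integral[OF exp_D_integrable[OF assms]]) auto
  finally show ?thesis using LL_pow[OF assms, of k] by simp
qed

lemma HH0: assumes "0 < s" shows "HH 0 s = ennreal (1 / (1 - LL s))"
proof -
  have l: "norm (LL s) < 1" using LL_nonneg LL_less1[OF assms] by auto
  have "hh 0 s = (\<lambda>k. ennreal (LL s ^ k))" using assms by (simp add: hh0 fun_eq_iff)
  hence "HH 0 s = (\<Sum>k. ennreal (LL s ^ k))" unfolding HH_def by simp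
  also have "\<dots> = ennreal (\<Sum>k. LL s ^ k)"
    by (rule suminf_ennreal2) (use l LL_nonneg in \<open>auto intro: summable_geometric\<close>)
  also have "\<dots> = ennreal (1 / (1 - LL s))" using suminf_geometric[OF l] by simp
  finally show ?thesis .
qed

lemma HH_fin: assumes "0 < s" shows "HH i s < \<top>"
proof -
  have "hh i s k \<le> ennreal (fact i * (2 / s) ^ i) * hh 0 (s/2) k" for k
  proof -
    have pw: "D k \<omega> ^ i * exp (- s * D k \<omega>) \<le> fact i * (2 / s) ^ i * exp (- (s/2) * D k \<omega>)" for \<omega>
      by (rule pow_exp_bound[OF D_nonneg assms])
    have "hh i s k \<le> (\<integral>\<^sup>+\<omega>. ennreal (fact i * (2 / s) ^ i) * ennreal (exp (- (s/2) * D k \<omega>)) \<partial>M)"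
      unfolding hh_def
      by (intro nn_integral_mono)
         (use pw in \<open>auto simp: ennreal_mult''[symmetric] simp del: mult_minus_left intro!: ennreal_leI\<close>)
    also have "\<dots> = ennreal (fact i * (2 / s) ^ i) * hh 0 (s/2) k"
      unfolding hh_def by (subst nn_integral_cmult) auto
    finally show ?thesis .
  qed
  hence "HH i s \<le> (\<Sum>k. ennreal (fact i * (2 / s) ^ i) * hh 0 (s/2) k)"
    unfolding HH_def by (intro suminf_le) auto
  also have "\<dots> = ennreal (fact i * (2 / s) ^ i) * HH 0 (s/2)"
    by (simp add: HH_def)
  also have "\<dots> < \<top>" using assms by (simp add: HH0 ennreal_mult_less_top)
  finally show ?thesis .
qed


lemma pw_series:
  fixes x :: real assumes "0 \<le> x" "s \<le> c"
  shows "ennreal (x ^ i * exp (- s * x)) = (\<Sum>j. ennreal (x ^ (i + j) * exp (- c * x)) * ennreal ((c - s) ^ j / fact j))"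
proof -
  have S0: "(\<lambda>j. x ^ i * exp (- c * x) * (((c - s) * x) ^ j /\<^sub>R fact j)) sums (x ^ i * exp (- c * x) * exp ((c - s) * x))"
    by (intro sums_mult exp_converges)
  have e1: "x ^ i * exp (- c * x) * exp ((c - s) * x) = x ^ i * exp (- s * x)"
    by (simp add: mult.assoc exp_add[symmetric] algebra_simps)
  have e2: "(\<lambda>j. x ^ i * exp (- c * x) * (((c - s) * x) ^ j /\<^sub>R fact j)) = (\<lambda>j. x ^ (i + j) * exp (- c * x) * ((c - s) ^ j / fact j))"
    by (rule ext) (simp add: power_mult_distrib power_add divide_inverse_commute)
  have S: "(\<lambda>j. x ^ (i + j) * exp (- c * x) * ((c - s) ^ j / fact j)) sums (x ^ i * exp (- s * x))"
    using S0 unfolding e1 e2 .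
  have "(\<Sum>j. ennreal (x ^ (i + j) * exp (- c * x) * ((c - s) ^ j / fact j))) = ennreal (x ^ i * exp (- s * x))"
    by (rule suminf_ennreal_eq[OF _ S]) (use assms in auto)
  moreover have "ennreal (x ^ (i + j) * exp (- c * x) * ((c - s) ^ j / fact j)) = ennreal (x ^ (i + j) * exp (- c * x)) * ennreal ((c - s) ^ j / fact j)" for j
    by (rule ennreal_mult'') (use assms in auto)
  ultimately show ?thesis by simp
qed

lemma HH_series:
  assumes "s \<le> c"
  shows "HH i s = (\<Sum>j. HH (i + j) c * ennreal ((c - s) ^ j / fact j))"
proof -
  have hk: "hh i s k = (\<Sum>j. hh (i + j) c k * ennreal ((c - s) ^ j / fact j))" for k
  proof -
    have "hh i s k = (\<integral>\<^sup>+\<omega>. (\<Sum>j. ennreal (D k \<omega> ^ (i + j) * exp (- c * D k \<omega>)) * ennreal ((c - s) ^ j / fact j)) \<partial>M)"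
      unfolding hh_def by (intro nn_integral_cong pw_series D_nonneg assms)
    also have "\<dots> = (\<Sum>j. \<integral>\<^sup>+\<omega>. ennreal (D k \<omega> ^ (i + j) * exp (- c * D k \<omega>)) * ennreal ((c - s) ^ j / fact j) \<partial>M)"
      by (rule nn_integral_suminf) auto
    also have "\<dots> = (\<Sum>j. hh (i + j) c k * ennreal ((c - s) ^ j / fact j))"
      unfolding hh_def by (subst nn_integral_multc) auto
    finally show ?thesis .
  qed
  have "HH i s = (\<Sum>k. \<Sum>j. hh (i + j) c k * ennreal ((c - s) ^ j / fact j))"
    unfolding HH_def by (rule suminf_cong) (rule hk)
  also have "\<dots> = (\<Sum>j. \<Sum>k. hh (i + j) c k * ennreal ((c - s) ^ j / fact j))"
    by (rule ennreal_suminf_swap)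
  also have "\<dots> = (\<Sum>j. HH (i + j) c * ennreal ((c - s) ^ j / fact j))"
    unfolding HH_def by simp
  finally show ?thesis .
qed

definition Hr :: "nat \<Rightarrow> real \<Rightarrow> real" where "Hr i s = enn2real (HH i s)"

lemma HH_Hr: "0 < s \<Longrightarrow> HH i s = ennreal (Hr i s)"
  using HH_fin[of s i] by (simp add: Hr_def less_top)

lemma Hr_nonneg: "0 \<le> Hr i s" by (simp add: Hr_def)

lemma Hr0: "0 < s \<Longrightarrow> Hr 0 s = 1 / (1 - LL s)"
  using LL_less1[of s] by (simp add: Hr_def HH0)

lemma Hr_sums:
  assumes "0 < s" "s \<le> c"
  shows "(\<lambda>j. Hr (i + j) c * ((c - s) ^ j / fact j)) sums Hr i s"
proof -
  have c: "0 < c" using assms by simp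
  have "(\<lambda>j. ennreal (Hr (i + j) c * ((c - s) ^ j / fact j))) sums (\<Sum>j. ennreal (Hr (i + j) c * ((c - s) ^ j / fact j)))"
    by (rule summable_sums) simp
  moreover have "(\<Sum>j. ennreal (Hr (i + j) c * ((c - s) ^ j / fact j))) = ennreal (Hr i s)"
  proof -
    have "(\<Sum>j. ennreal (Hr (i + j) c * ((c - s) ^ j / fact j))) = (\<Sum>j. HH (i + j) c * ennreal ((c - s) ^ j / fact j))"
      using assms by (intro suminf_cong, subst ennreal_mult'') (auto simp: HH_Hr[OF c])
    also have "\<dots> = HH i s" by (rule HH_series[symmetric]) fact
    finally show ?thesis using HH_Hr[OF assms(1)] by simp
  qed
  ultimately have "(\<lambda>j. ennreal (Hr (i + j) c * ((c - s) ^ j / fact j))) sums ennreal (Hr i s)" by simp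
  thus ?thesis using assms by (subst (asm) sums_ennreal) (auto intro!: mult_nonneg_nonneg divide_nonneg_nonneg Hr_nonneg)
qed

theorem deriv_G:
  "(deriv ^^ i) (\<lambda>s. 1 / (1 - LL s)) mu = (-1) ^ i * Hr i mu"
proof -
  define c where "c = 2 * mu"
  have c: "0 < c" "mu < c" using mu by (auto simp: c_def)
  define b where "b = (\<lambda>i j. Hr (i + j) c / fact j)"
  have sums: "(\<lambda>j. b i j * (c - s) ^ j) sums Hr i s" if "0 < s" "s \<le> c" for i s
    using Hr_sums[OF that, of i] by (simp add: b_def field_simps)
  have P: "(deriv ^^ i) (\<lambda>s. \<Sum>j. b 0 j * (c - s) ^ j) mu = (-1) ^ i * (\<Sum>j. b i j * (c - mu) ^ j)"
  proof (rule ps_higher_deriv[where R=c])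
    show "0 \<le> b i j" for i j by (simp add: b_def Hr_nonneg)
    show "summable (\<lambda>j. b i j * K ^ j)" if "0 \<le> K" "K < c" for i K
      using sums[of "c - K" i] that by (auto simp: sums_iff)
    show "diffs (b i) = b (Suc i)" for i
      by (simp add: diffs_def b_def fun_eq_iff fact_Suc)
    show "mu \<in> ball c c" using c mu by (auto simp: dist_real_def)
  qed
  have ev: "\<forall>\<^sub>F s in nhds mu. 1 / (1 - LL s) = (\<Sum>j. b 0 j * (c - s) ^ j)"
  proof -
    have "\<forall>\<^sub>F s in nhds mu. s \<in> {0<..<c}"
      by (rule eventually_nhds_in_open) (use c mu in auto)
    thus ?thesis
    proof eventually_elim
      case (elim s) thus ?case using sums[of s 0] Hr0[of s] by (auto simp: sums_iff)
    qed
  qed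
  have "(deriv ^^ i) (\<lambda>s. 1 / (1 - LL s)) mu = (deriv ^^ i) (\<lambda>s. \<Sum>j. b 0 j * (c - s) ^ j) mu"
    by (rule higher_deriv_cong_ev[OF ev refl])
  also have "\<dots> = (-1) ^ i * Hr i mu"
    using P sums[of mu i] c mu by (simp add: sums_iff)
  finally show ?thesis .
qed

end


context model begin

definition EE :: "nat \<Rightarrow> 'a set" where "EE k = {\<omega> \<in> space M. D k \<omega> < Y \<omega>}"

lemma EE_sets[measurable]: "EE k \<in> sets M" unfolding EE_def by measurable

lemma Y_gt: "0 \<le> a \<Longrightarrow> prob {\<omega> \<in> space M. a < Y \<omega>} = (\<Sum>i<n. mu ^ i / fact i * (a ^ i * exp (- mu * a)))"
proof -
  assume a: "0 \<le> a"
  have "prob {\<omega> \<in> space M. a < Y \<omega>} = 1 - erlang_CDF (n - 1) mu a"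
    using erlang_distributed_gt[OF Ydist mu a] by simp
  also have "\<dots> = (\<Sum>i\<le>n - 1. (mu * a) ^ i * exp (- mu * a) / fact i)"
    using a by (simp add: erlang_CDF_def)
  also have "{..n - 1} = {..<n}" using n1 by auto
  finally show ?thesis by (simp add: power_mult_distrib field_simps)
qed

lemma Y_pos_AE: "AE \<omega> in M. 0 < Y \<omega>"
proof -
  have "prob {\<omega> \<in> space M. 0 < Y \<omega>} = 1"
  proof -
    have "(\<Sum>i<n. mu ^ i / fact i * (0 ^ i * exp (- mu * 0))) = (\<Sum>i<n. if i = 0 then 1 else 0 :: real)"
      by (intro sum.cong) auto
    also have "\<dots> = 1" using n1 by simp
    finally show ?thesis using Y_gt[of 0] by simp
  qed
  hence "AE \<omega> in M. \<omega> \<in> {\<omega> \<in> space M. 0 < Y \<omega>}" by (subst (asm) prob_eq_1) auto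
  thus ?thesis by auto
qed

lemma emeasure_EE: "emeasure M (EE k) = (\<Sum>i<n. ennreal (mu ^ i / fact i) * hh i mu k)"
proof -
  have f: "(indicator {p :: real \<times> real. fst p < snd p} :: real \<times> real \<Rightarrow> ennreal) \<in> borel_measurable (borel \<Otimes>\<^sub>M borel)"
  proof -
    have "{p::real\<times>real. fst p < snd p} \<in> sets borel"
      apply (rule borel_open)
      apply (rule open_Collect_less)
      apply (rule continuous_on_fst[OF continuous_on_id])
      apply (rule continuous_on_snd[OF continuous_on_id])
      done
    thus ?thesis unfolding borel_prod by (rule borel_measurable_indicator)
  qed
  have "emeasure M (EE k) = (\<integral>\<^sup>+\<omega>. indicator (EE k) \<omega> \<partial>M)" by simp
  also have "\<dots> = (\<integral>\<^sup>+\<omega>. indicator {p. fst p < snd p} (D k \<omega>, Y \<omega>) \<partial>M)"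
    by (intro nn_integral_cong) (auto simp: EE_def indicator_def)
  also have "\<dots> = (\<integral>\<^sup>+\<omega>. (\<integral>\<^sup>+\<omega>'. indicator {p. fst p < snd p} (D k \<omega>, Y \<omega>') \<partial>M) \<partial>M)"
    by (rule indep_fubini[OF prob_space_axioms indep_D_Y f])
  also have "\<dots> = (\<integral>\<^sup>+\<omega>. ennreal (\<Sum>i<n. mu ^ i / fact i * (D k \<omega> ^ i * exp (- mu * D k \<omega>))) \<partial>M)"
  proof (intro nn_integral_cong)
    fix \<omega>
    have "(\<integral>\<^sup>+\<omega>'. indicator {p. fst p < snd p} (D k \<omega>, Y \<omega>') \<partial>M) = (\<integral>\<^sup>+\<omega>'. indicator {\<omega>' \<in> space M. D k \<omega> < Y \<omega>'} \<omega>' \<partial>M)"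
      by (intro nn_integral_cong) (auto simp: indicator_def)
    also have "\<dots> = emeasure M {\<omega>' \<in> space M. D k \<omega> < Y \<omega>'}" by (rule nn_integral_indicator) measurable
    also have "\<dots> = ennreal (prob {\<omega>' \<in> space M. D k \<omega> < Y \<omega>'})" by (simp add: emeasure_eq_measure)
    also have "\<dots> = ennreal (\<Sum>i<n. mu ^ i / fact i * (D k \<omega> ^ i * exp (- mu * D k \<omega>)))"
      by (simp add: Y_gt D_nonneg)
    finally show "(\<integral>\<^sup>+\<omega>'. indicator {p. fst p < snd p} (D k \<omega>, Y \<omega>') \<partial>M) = \<dots>" .
  qed
  also have "\<dots> = (\<integral>\<^sup>+\<omega>. (\<Sum>i<n. ennreal (mu ^ i / fact i) * ennreal (D k \<omega> ^ i * exp (- mu * D k \<omega>))) \<partial>M)"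
  proof (intro nn_integral_cong)
    fix \<omega>
    have "ennreal (\<Sum>i<n. mu ^ i / fact i * (D k \<omega> ^ i * exp (- mu * D k \<omega>)))
        = (\<Sum>i<n. ennreal (mu ^ i / fact i * (D k \<omega> ^ i * exp (- mu * D k \<omega>))))"
      by (rule sum_ennreal[symmetric]) (use mu D_nonneg in auto)
    also have "\<dots> = (\<Sum>i<n. ennreal (mu ^ i / fact i) * ennreal (D k \<omega> ^ i * exp (- mu * D k \<omega>)))"
      by (intro sum.cong refl ennreal_mult'') (simp add: D_nonneg)
    finally show "ennreal (\<Sum>i<n. mu ^ i / fact i * (D k \<omega> ^ i * exp (- mu * D k \<omega>))) = \<dots>" .
  qed
  also have "\<dots> = (\<Sum>i<n. \<integral>\<^sup>+\<omega>. ennreal (mu ^ i / fact i) * ennreal (D k \<omega> ^ i * exp (- mu * D k \<omega>)) \<partial>M)"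
    by (rule nn_integral_sum) measurable
  also have "\<dots> = (\<Sum>i<n. ennreal (mu ^ i / fact i) * hh i mu k)"
    unfolding hh_def by (intro sum.cong refl nn_integral_cmult) measurable
  finally show ?thesis .
qed


lemma sum_EE: "(\<Sum>k. emeasure M (EE k)) = ennreal (\<Sum>i<n. mu ^ i / fact i * Hr i mu)"
proof -
  have "(\<Sum>k. emeasure M (EE k)) = (\<Sum>k. \<Sum>i<n. ennreal (mu ^ i / fact i) * hh i mu k)"
    by (simp add: emeasure_EE)
  also have "\<dots> = (\<Sum>i<n. \<Sum>k. ennreal (mu ^ i / fact i) * hh i mu k)"
    by (rule suminf_sum) simp
  also have "\<dots> = (\<Sum>i<n. ennreal (mu ^ i / fact i) * ennreal (Hr i mu))"
    by (intro sum.cong refl) (simp add: HH_def[symmetric] HH_Hr[OF mu])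
  also have "\<dots> = (\<Sum>i<n. ennreal (mu ^ i / fact i * Hr i mu))"
    by (intro sum.cong refl ennreal_mult''[symmetric]) (simp add: Hr_nonneg)
  also have "\<dots> = ennreal (\<Sum>i<n. mu ^ i / fact i * Hr i mu)"
    by (rule sum_ennreal) (use mu Hr_nonneg in auto)
  finally show ?thesis .
qed

lemma AE_finite: "AE \<omega> in M. \<exists>k. Y \<omega> \<le> D k \<omega>"
proof -
  define p where "p k = prob (EE k)" for k
  have "(\<Sum>k. ennreal (p k)) \<noteq> \<top>"
    using sum_EE by (simp add: p_def emeasure_eq_measure[symmetric])
  hence "summable p" by (intro summable_suminf_not_top) (auto simp: p_def)
  hence lim: "p \<longlonglongrightarrow> 0" by (rule summable_LIMSEQ_zero)
  define N where "N = {\<omega> \<in> space M. \<forall>k. D k \<omega> < Y \<omega>}"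
  have N[measurable]: "N \<in> sets M" unfolding N_def by measurable
  have "prob N \<le> p k" for k unfolding p_def
    by (rule finite_measure_mono) (auto simp: N_def EE_def)
  hence "prob N \<le> 0" using lim by (intro LIMSEQ_le_const) auto
  hence "prob N = 0" using measure_nonneg[of M N] by linarith
  hence "AE \<omega> in M. \<omega> \<notin> N" by (subst (asm) prob_eq_0) auto
  thus ?thesis by (auto simp: N_def not_less)
qed

lemma Bbar_char:
  assumes "0 < Y \<omega>" "Y \<omega> \<le> D k0 \<omega>"
  shows "D k \<omega> < Y \<omega> \<longleftrightarrow> k < Bbar C (Y \<omega>) \<omega>"
proof -
  define m where "m = Bbar C (Y \<omega>) \<omega>"
  have m: "m = (LEAST k. 1 \<le> k \<and> Y \<omega> \<le> D k \<omega>)" by (simp add: m_def Bbar_def D_def)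
  have ex: "1 \<le> Suc k0 \<and> Y \<omega> \<le> D (Suc k0) \<omega>" using assms D_mono[of k0 "Suc k0" \<omega>] by auto
  have mP: "1 \<le> m \<and> Y \<omega> \<le> D m \<omega>" unfolding m by (rule LeastI[of "\<lambda>k. 1 \<le> k \<and> Y \<omega> \<le> D k \<omega>", OF ex])
  show ?thesis
  proof
    assume "D k \<omega> < Y \<omega>"
    show "k < Bbar C (Y \<omega>) \<omega>"
    proof (rule ccontr)
      assume "\<not> k < Bbar C (Y \<omega>) \<omega>"
      hence "m \<le> k" by (simp add: m_def)
      hence "D m \<omega> \<le> D k \<omega>" by (rule D_mono)
      with mP \<open>D k \<omega> < Y \<omega>\<close> show False by simp
    qed
  next
    assume "k < Bbar C (Y \<omega>) \<omega>"
    hence km: "k < m" by (simp add: m_def)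
    show "D k \<omega> < Y \<omega>"
    proof (cases "k = 0")
      case True thus ?thesis using assms by simp
    next
      case False
      have "\<not> (1 \<le> k \<and> Y \<omega> \<le> D k \<omega>)" using not_less_Least[OF km[unfolded m]] .
      thus ?thesis using False by auto
    qed
  qed
qed

lemma K_AE: "AE \<omega> in M. ennreal (real (Bbar C (Y \<omega>) \<omega>)) = (\<Sum>k. indicator (EE k) \<omega>)"
  using AE_finite Y_pos_AE AE_space
proof eventually_elim
  case (elim \<omega>)
  then obtain k0 where k0: "Y \<omega> \<le> D k0 \<omega>" by auto
  define m where "m = Bbar C (Y \<omega>) \<omega>"
  have "(\<Sum>k. indicator (EE k) \<omega> :: ennreal) = (\<Sum>k\<in>{..<m}. indicator (EE k) \<omega>)"
    by (rule suminf_finite) (use Bbar_char[OF _ k0] elim in \<open>auto simp: EE_def m_def\<close>)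
  also have "\<dots> = (\<Sum>k\<in>{..<m}. 1)"
    by (intro sum.cong refl) (use Bbar_char[OF _ k0] elim in \<open>auto simp: EE_def m_def\<close>)
  finally show ?case by (simp add: m_def ennreal_of_nat_eq_real_of_nat)
qed

theorem part1:
  "(\<integral>\<^sup>+ \<omega>. ennreal (real (Bbar C (Y \<omega>) \<omega>)) \<partial>M)
     = ennreal (\<Sum>i<n. mu ^ i / fact i * (-1) ^ i * (deriv ^^ i) (\<lambda>s. 1 / (1 - LL s)) mu)"
proof -
  have "(\<integral>\<^sup>+ \<omega>. ennreal (real (Bbar C (Y \<omega>) \<omega>)) \<partial>M) = (\<integral>\<^sup>+ \<omega>. (\<Sum>k. indicator (EE k) \<omega>) \<partial>M)"
    by (rule nn_integral_cong_AE[OF K_AE])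
  also have "\<dots> = (\<Sum>k. emeasure M (EE k))"
    by (subst nn_integral_suminf) auto
  also have "\<dots> = ennreal (\<Sum>i<n. mu ^ i / fact i * (-1) ^ i * (deriv ^^ i) (\<lambda>s. 1 / (1 - LL s)) mu)"
    unfolding sum_EE deriv_G
    by (intro arg_cong[where f=ennreal] sum.cong refl) (simp add: power_mult_distrib[symmetric])
  finally show ?thesis .
qed

end


lemma borel_meas_pair_set:
  fixes P :: "real \<Rightarrow> real \<Rightarrow> bool"
  assumes "{p :: real \<times> real. P (fst p) (snd p)} \<in> sets borel"
  shows "(\<lambda>p. indicator {p. P (fst p) (snd p)} p :: ennreal) \<in> borel_measurable (borel \<Otimes>\<^sub>M borel)"
  using assms unfolding borel_prod by (rule borel_measurable_indicator)

lemma set_Y_Yd: "{p :: real \<times> real. a < fst p \<and> fst p \<le> b \<and> b < fst p + snd p} \<in> sets borel"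
proof -
  have "{p :: real \<times> real. a < fst p \<and> fst p \<le> b \<and> b < fst p + snd p}
    = {p. a < fst p} \<inter> {p. fst p \<le> b} \<inter> {p. b < fst p + snd p}" by auto
  also have "\<dots> \<in> sets borel"
  proof (intro sets.Int)
    show "{p :: real \<times> real. a < fst p} \<in> sets borel"
      by (rule borel_open, rule open_Collect_less) (rule continuous_on_const, rule continuous_on_fst[OF continuous_on_id])
    show "{p :: real \<times> real. fst p \<le> b} \<in> sets borel"
      by (rule borel_closed, rule closed_Collect_le) (rule continuous_on_fst[OF continuous_on_id], rule continuous_on_const)
    show "{p :: real \<times> real. b < fst p + snd p} \<in> sets borel"
      by (rule borel_open, rule open_Collect_less) (rule continuous_on_const, rule continuous_on_add[OF continuous_on_fst[OF continuous_on_id] continuous_on_snd[OF continuous_on_id]])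
  qed
  finally show ?thesis .
qed


lemma FTC_gen:
  fixes F g :: "real \<Rightarrow> real"
  assumes g[measurable]: "g \<in> borel_measurable borel"
    and d: "\<And>y. y \<in> {a..b} \<Longrightarrow> (F has_real_derivative g y) (at y)"
    and nn: "\<And>y. y \<in> {a..b} \<Longrightarrow> 0 \<le> g y" and ab: "a \<le> b"
  shows "(\<integral>\<^sup>+y. ennreal (g y) * indicator {a..b} y \<partial>lborel) = ennreal (F b - F a)" "F a \<le> F b"
proof -
  show "(\<integral>\<^sup>+y. ennreal (g y) * indicator {a..b} y \<partial>lborel) = ennreal (F b - F a)"
    using nn_integral_FTC_Icc[OF g d nn ab] by simp
  show "F a \<le> F b"
    by (rule DERIV_nonneg_imp_nondecreasing[OF ab]) (use d nn in auto)
qed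

context model begin

definition psi :: "real \<Rightarrow> real \<Rightarrow> real" where
  "psi a c = (if lam \<noteq> mu then mu ^ n / (mu - lam) ^ n *
       (\<Sum>i<n. (mu - lam) ^ i / fact i * (exp (- lam * c) * (a ^ i * exp (- mu * a)) - (a + c) ^ i * exp (- mu * (a + c))))
     else mu ^ n / fact n * ((a + c) ^ n * exp (- mu * (a + c)) - exp (- mu * c) * (a ^ n * exp (- mu * a))))"

definition gg :: "real \<Rightarrow> real \<Rightarrow> real" where
  "gg b y = mu ^ n * y ^ (n - 1) / fact (n - 1) * exp (- mu * y) * exp (- (b - y) * lam)"

lemma gg_meas[measurable]: "gg b \<in> borel_measurable borel"
  unfolding gg_def by (intro borel_measurable_continuous_onI continuous_intros) auto

lemma FTC_psi:
  assumes a: "0 \<le> a" and c: "0 < c"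
  shows "(\<integral>\<^sup>+y. ennreal (gg (a + c) y) * indicator {a..a + c} y \<partial>lborel) = ennreal (psi a c) \<and> 0 \<le> psi a c"
proof (cases "lam = mu")
  case False
  define v where "v = mu - lam"
  have v: "v \<noteq> 0" using False by (simp add: v_def)
  define b where "b = a + c"
  define F where "F y = - (mu ^ n * exp (- lam * b) / v ^ n) * (exp (- v * y) * Tsum n v y)" for y
  have d: "(F has_real_derivative gg b y) (at y)" for y
  proof -
    have "(F has_real_derivative - (mu ^ n * exp (- lam * b) / v ^ n) * (- (v ^ n * y ^ (n - 1) / fact (n - 1) * exp (- v * y)))) (at y)"
      unfolding F_def by (intro DERIV_cmult expTsum_deriv n1)
    moreover have "- (mu ^ n * exp (- lam * b) / v ^ n) * (- (v ^ n * y ^ (n - 1) / fact (n - 1) * exp (- v * y))) = gg b y"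
    proof -
      have "exp (- lam * b) * exp (- v * y) = exp (- mu * y) * exp (- (b - y) * lam)"
        by (simp add: exp_add[symmetric] v_def algebra_simps)
      thus ?thesis using v by (simp add: gg_def field_simps)
    qed
    ultimately show ?thesis by simp
  qed
  have nn: "0 \<le> gg b y" if "y \<in> {a..b}" for y using that a mu by (auto simp: gg_def)
  have ab: "a \<le> b" using c by (simp add: b_def)
  have eq: "F b - F a = psi a c"
  proof -
    have "F b - F a = mu ^ n / v ^ n * (exp (- lam * b) * exp (- v * a) * Tsum n v a - exp (- lam * b) * exp (- v * b) * Tsum n v b)"
      using v by (simp add: F_def field_simps)
    also have "exp (- lam * b) * exp (- v * a) = exp (- lam * c) * exp (- mu * a)"
      by (simp add: exp_add[symmetric] v_def b_def algebra_simps)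
    also have "exp (- lam * b) * exp (- v * b) = exp (- mu * b)"
      by (simp add: exp_add[symmetric] v_def algebra_simps)
    also have "exp (- lam * c) * exp (- mu * a) * Tsum n v a - exp (- mu * b) * Tsum n v b
        = (\<Sum>i<n. v ^ i / fact i * (exp (- lam * c) * (a ^ i * exp (- mu * a)) - b ^ i * exp (- mu * b)))"
      by (simp add: Tsum_def sum_distrib_left sum_subtractf[symmetric] power_mult_distrib field_simps)
    finally show ?thesis using False by (simp add: psi_def v_def b_def)
  qed
  from FTC_gen[OF gg_meas d nn ab] eq show ?thesis by (simp add: b_def)
next
  case True
  define b where "b = a + c"
  define F where "F y = mu ^ n * exp (- mu * b) / fact n * y ^ n" for y
  have d: "(F has_real_derivative gg b y) (at y)" for y
  proof -
    have "(F has_real_derivative mu ^ n * exp (- mu * b) / fact n * (real n * y ^ (n - Suc 0))) (at y)"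
      unfolding F_def by (intro DERIV_cmult DERIV_pow)
    moreover have "mu ^ n * exp (- mu * b) / fact n * (real n * y ^ (n - Suc 0)) = gg b y"
    proof -
      obtain m where m: "n = Suc m" using n1 by (cases n) auto
      have e: "exp (- mu * b) = exp (- mu * y) * exp (- (b - y) * mu)"
        by (simp add: exp_add[symmetric] algebra_simps)
      have f: "real n / fact n = 1 / fact (n - 1)"
        unfolding m by (simp add: fact_Suc)
      have "mu ^ n * exp (- mu * b) / fact n * (real n * y ^ (n - Suc 0))
          = mu ^ n * y ^ (n - 1) * exp (- mu * b) * (real n / fact n)" by simp
      also have "\<dots> = gg b y" unfolding gg_def unfolding f e True by (simp add: algebra_simps)
      finally show ?thesis .
    qed
    ultimately show ?thesis by simp
  qed
  have nn: "0 \<le> gg b y" if "y \<in> {a..b}" for y using that a mu by (auto simp: gg_def)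
  have ab: "a \<le> b" using c by (simp add: b_def)
  have eq: "F b - F a = psi a c"
  proof -
    have "exp (- mu * c) * exp (- mu * a) = exp (- mu * b)"
      by (simp add: exp_add[symmetric] b_def algebra_simps)
    have "psi a c = mu ^ n / fact n * ((a + c) ^ n * exp (- mu * (a + c)) - exp (- mu * c) * (a ^ n * exp (- mu * a)))"
      unfolding psi_def using True by simp
    also have "\<dots> = mu ^ n / fact n * ((a + c) ^ n * exp (- mu * b) - (exp (- mu * c) * exp (- mu * a)) * a ^ n)"
      by (simp add: b_def algebra_simps)
    also have "\<dots> = F b - F a" unfolding \<open>exp (- mu * c) * exp (- mu * a) = exp (- mu * b)\<close>
      by (simp add: F_def b_def algebra_simps)
    finally show ?thesis by simp
  qed
  from FTC_gen[OF gg_meas d nn ab] eq show ?thesis by (simp add: b_def)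
qed


lemma psi_inner:
  assumes a: "0 \<le> a" and c: "0 < c"
  shows "(\<integral>\<^sup>+\<omega>'. indicator {p. a < fst p \<and> fst p \<le> a + c \<and> a + c < fst p + snd p} (Y \<omega>', Yd \<omega>') \<partial>M) = ennreal (psi a c)"
proof -
  define b where "b = a + c"
  have "(\<integral>\<^sup>+\<omega>'. indicator {p. a < fst p \<and> fst p \<le> b \<and> b < fst p + snd p} (Y \<omega>', Yd \<omega>') \<partial>M)
      = (\<integral>\<^sup>+\<omega>'. (\<integral>\<^sup>+\<omega>''. indicator {p. a < fst p \<and> fst p \<le> b \<and> b < fst p + snd p} (Y \<omega>', Yd \<omega>'') \<partial>M) \<partial>M)"
    by (rule indep_fubini[OF prob_space_axioms indep_Y_Yd borel_meas_pair_set[OF set_Y_Yd]])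
  also have "\<dots> = (\<integral>\<^sup>+\<omega>'. ennreal (indicator {a<..b} (Y \<omega>') * exp (- (b - Y \<omega>') * lam)) \<partial>M)"
  proof (intro nn_integral_cong)
    fix \<omega>'
    show "(\<integral>\<^sup>+\<omega>''. indicator {p. a < fst p \<and> fst p \<le> b \<and> b < fst p + snd p} (Y \<omega>', Yd \<omega>'') \<partial>M)
        = ennreal (indicator {a<..b} (Y \<omega>') * exp (- (b - Y \<omega>') * lam))"
    proof (cases "a < Y \<omega>' \<and> Y \<omega>' \<le> b")
      case True
      have "(\<integral>\<^sup>+\<omega>''. indicator {p. a < fst p \<and> fst p \<le> b \<and> b < fst p + snd p} (Y \<omega>', Yd \<omega>'') \<partial>M)
          = (\<integral>\<^sup>+\<omega>''. indicator {\<omega>'' \<in> space M. b - Y \<omega>' < Yd \<omega>''} \<omega>'' \<partial>M)"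
        using True by (intro nn_integral_cong) (auto simp: indicator_def)
      also have "\<dots> = emeasure M {\<omega>'' \<in> space M. b - Y \<omega>' < Yd \<omega>''}"
        by (rule nn_integral_indicator) measurable
      also have "\<dots> = ennreal (exp (- (b - Y \<omega>') * lam))"
        using exponential_distributedD_gt[OF Yddist, of "b - Y \<omega>'"] True lam
        by (simp add: emeasure_eq_measure)
      finally show ?thesis using True by simp
    next
      case False
      thus ?thesis by (auto simp: indicator_def)
    qed
  qed
  also have "\<dots> = (\<integral>\<^sup>+y. ennreal (erlang_density (n - 1) mu y) * ennreal (indicator {a<..b} y * exp (- (b - y) * lam)) \<partial>lborel)"
    by (rule distributed_nn_integral[OF Ydist, symmetric]) measurable
  also have "\<dots> = (\<integral>\<^sup>+y. ennreal (gg b y) * indicator {a..b} y \<partial>lborel)"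
  proof (rule nn_integral_cong_AE)
    show "AE y in lborel. ennreal (erlang_density (n - 1) mu y) * ennreal (indicator {a<..b} y * exp (- (b - y) * lam))
        = ennreal (gg b y) * indicator {a..b} y"
      using AE_lborel_singleton[of a]
    proof eventually_elim
      case (elim y)
      show ?case
      proof (cases "a < y \<and> y \<le> b")
        case True
        hence "0 \<le> y" using a by auto
        hence "erlang_density (n - 1) mu y * exp (- (b - y) * lam) = gg b y"
          using n1 by (simp add: erlang_density_def gg_def)
        thus ?thesis using True by (simp add: ennreal_mult''[symmetric])
      next
        case False
        thus ?thesis using elim by (auto simp: indicator_def)
      qed
    qed
  qed
  also have "\<dots> = ennreal (psi a c)" using FTC_psi[OF a c] by (simp add: b_def)
  finally show ?thesis by (simp add: b_def)
qed


definition BB :: "nat \<Rightarrow> 'a set" where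
  "BB k = {\<omega> \<in> space M. D k \<omega> < Y \<omega> \<and> Y \<omega> \<le> D (Suc k) \<omega> \<and> D (Suc k) \<omega> < Y \<omega> + Yd \<omega>}"

lemma BB_sets[measurable]: "BB k \<in> sets M" unfolding BB_def by measurable

definition SS :: "((real \<times> real) \<times> (real \<times> real)) set" where
  "SS = {q. fst (fst q) < fst (snd q) \<and> fst (snd q) \<le> fst (fst q) + snd (fst q)
            \<and> fst (fst q) + snd (fst q) < fst (snd q) + snd (snd q)}"

lemma SS_meas: "(indicator SS :: _ \<Rightarrow> ennreal) \<in> borel_measurable (borel \<Otimes>\<^sub>M borel)"
proof -
  have "SS = {q. fst (fst q) < fst (snd q)} \<inter> {q. fst (snd q) \<le> fst (fst q) + snd (fst q)}
      \<inter> {q. fst (fst q) + snd (fst q) < fst (snd q) + snd (snd q)}" by (auto simp: SS_def)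
  also have "\<dots> \<in> sets borel"
  proof (intro sets.Int)
    show "{q :: (real \<times> real) \<times> (real \<times> real). fst (fst q) < fst (snd q)} \<in> sets borel"
      by (rule borel_open, rule open_Collect_less) (intro continuous_intros)+
    show "{q :: (real \<times> real) \<times> (real \<times> real). fst (snd q) \<le> fst (fst q) + snd (fst q)} \<in> sets borel"
      by (rule borel_closed, rule closed_Collect_le) (intro continuous_intros)+
    show "{q :: (real \<times> real) \<times> (real \<times> real). fst (fst q) + snd (fst q) < fst (snd q) + snd (snd q)} \<in> sets borel"
      by (rule borel_open, rule open_Collect_less) (intro continuous_intros)+
  qed
  finally show ?thesis unfolding borel_prod by (rule borel_measurable_indicator)
qed

lemma emeasure_BB: "emeasure M (BB k) = (\<integral>\<^sup>+\<omega>. ennreal (psi (D k \<omega>) (C (Suc k) \<omega>)) \<partial>M)"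
proof -
  have "emeasure M (BB k) = (\<integral>\<^sup>+\<omega>. indicator (BB k) \<omega> \<partial>M)" by simp
  also have "\<dots> = (\<integral>\<^sup>+\<omega>. indicator SS ((D k \<omega>, C (Suc k) \<omega>), (Y \<omega>, Yd \<omega>)) \<partial>M)"
    by (intro nn_integral_cong) (auto simp: BB_def SS_def indicator_def D_Suc)
  also have "\<dots> = (\<integral>\<^sup>+\<omega>. (\<integral>\<^sup>+\<omega>'. indicator SS ((D k \<omega>, C (Suc k) \<omega>), (Y \<omega>', Yd \<omega>')) \<partial>M) \<partial>M)"
    by (rule indep_fubini[OF prob_space_axioms indep_pair SS_meas])
  also have "\<dots> = (\<integral>\<^sup>+\<omega>. ennreal (psi (D k \<omega>) (C (Suc k) \<omega>)) \<partial>M)"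
  proof (intro nn_integral_cong)
    fix \<omega>
    have "(\<integral>\<^sup>+\<omega>'. indicator SS ((D k \<omega>, C (Suc k) \<omega>), (Y \<omega>', Yd \<omega>')) \<partial>M)
      = (\<integral>\<^sup>+\<omega>'. indicator {p. D k \<omega> < fst p \<and> fst p \<le> D k \<omega> + C (Suc k) \<omega> \<and> D k \<omega> + C (Suc k) \<omega> < fst p + snd p} (Y \<omega>', Yd \<omega>') \<partial>M)"
      by (intro nn_integral_cong) (auto simp: SS_def indicator_def)
    also have "\<dots> = ennreal (psi (D k \<omega>) (C (Suc k) \<omega>))"
      by (rule psi_inner[OF D_nonneg Cpos])
    finally show "(\<integral>\<^sup>+\<omega>'. indicator SS ((D k \<omega>, C (Suc k) \<omega>), (Y \<omega>', Yd \<omega>')) \<partial>M) = \<dots>" .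
  qed
  finally show ?thesis .
qed

end


context model begin

definition Uf :: "nat \<Rightarrow> nat \<Rightarrow> 'a \<Rightarrow> real" where
  "Uf i k \<omega> = D k \<omega> ^ i * exp (- mu * D k \<omega>)"

definition hr :: "nat \<Rightarrow> nat \<Rightarrow> real" where "hr i k = expectation (Uf i k)"

lemma Uf_meas[measurable]: "Uf i k \<in> borel_measurable M" unfolding Uf_def by measurable

lemma Uf_bound: "\<bar>Uf i k \<omega>\<bar> \<le> fact i * (2 / mu) ^ i"
  using pow_exp_bound2[OF D_nonneg mu, of k \<omega> i] D_nonneg[of k \<omega>] by (simp add: Uf_def)

lemma Uf_int: "integrable M (Uf i k)"
  by (rule integrable_const_bound[where B="fact i * (2 / mu) ^ i"]) (auto simp: Uf_bound)

lemma Uf_nonneg: "0 \<le> Uf i k \<omega>" by (simp add: Uf_def D_nonneg)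

lemma hh_hr: "hh i mu k = ennreal (hr i k)"
  unfolding hh_def hr_def Uf_def[symmetric]
  by (rule nn_integral_eq_integral[OF Uf_int]) (simp add: Uf_nonneg)

lemma hr_nonneg: "0 \<le> hr i k" unfolding hr_def by (simp add: Uf_nonneg)

lemma hr_sums: "(\<lambda>k. hr i k) sums Hr i mu"
proof -
  have "(\<lambda>k. ennreal (hr i k)) sums (\<Sum>k. ennreal (hr i k))" by (rule summable_sums) simp
  moreover have "(\<Sum>k. ennreal (hr i k)) = ennreal (Hr i mu)"
    using HH_Hr[OF mu, of i] by (simp add: HH_def hh_hr[symmetric])
  ultimately show ?thesis by (simp add: hr_nonneg Hr_nonneg)
qed

lemma hr0: "hr i 0 = 0 ^ i"
proof -
  have "Uf i 0 = (\<lambda>\<omega>. 0 ^ i)" by (simp add: fun_eq_iff Uf_def)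
  thus ?thesis by (simp add: hr_def prob_space)
qed

lemma VU_int: assumes s: "0 \<le> s" shows "integrable M (\<lambda>\<omega>. exp (- s * C (Suc k) \<omega>) * Uf i k \<omega>)"
proof (rule integrable_const_bound[where B="fact i * (2 / mu) ^ i"])
  show "AE \<omega> in M. norm (exp (- s * C (Suc k) \<omega>) * Uf i k \<omega>) \<le> fact i * (2 / mu) ^ i"
  proof (rule AE_I2)
    fix \<omega>
    have e: "exp (- s * C (Suc k) \<omega>) \<le> 1" using s Cpos[of "Suc k" \<omega>] by (simp add: mult_nonneg_nonneg)
    have "norm (exp (- s * C (Suc k) \<omega>) * Uf i k \<omega>) = exp (- s * C (Suc k) \<omega>) * \<bar>Uf i k \<omega>\<bar>"
      by (simp add: abs_mult)
    also have "\<dots> \<le> 1 * (fact i * (2 / mu) ^ i)"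
      by (rule mult_mono[OF e Uf_bound]) auto
    finally show "norm (exp (- s * C (Suc k) \<omega>) * Uf i k \<omega>) \<le> fact i * (2 / mu) ^ i" by simp
  qed
qed measurable


lemma E_VU: assumes s: "0 \<le> s"
  shows "expectation (\<lambda>\<omega>. exp (- s * C (Suc k) \<omega>) * Uf i k \<omega>) = LL s * hr i k"
proof -
  have ind: "indep_var borel ((\<lambda>x. x ^ i * exp (- mu * x)) \<circ> D k) borel ((\<lambda>x. exp (- s * x)) \<circ> C (Suc k))"
    by (rule indep_var_compose[OF indep_D_C]) auto
  have e1: "(\<lambda>x. x ^ i * exp (- mu * x)) \<circ> D k = Uf i k" by (simp add: fun_eq_iff Uf_def)
  have e2: "(\<lambda>x. exp (- s * x)) \<circ> C (Suc k) = (\<lambda>\<omega>. exp (- s * C (Suc k) \<omega>))" by (simp add: fun_eq_iff)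
  have "expectation (\<lambda>\<omega>. Uf i k \<omega> * exp (- s * C (Suc k) \<omega>)) = expectation (Uf i k) * expectation (\<lambda>\<omega>. exp (- s * C (Suc k) \<omega>))"
    by (rule indep_var_lebesgue_integral[OF ind[unfolded e1 e2] Uf_int exp_C_integrable[OF s]])
  also have "expectation (\<lambda>\<omega>. exp (- s * C (Suc k) \<omega>)) = LL s"
    unfolding LL_def by (rule E_C_same) auto
  finally show ?thesis by (simp add: hr_def mult.commute)
qed

lemma Uf_Suc: "Uf i (Suc k) \<omega> = (D k \<omega> + C (Suc k) \<omega>) ^ i * exp (- mu * (D k \<omega> + C (Suc k) \<omega>))"
  by (simp add: Uf_def D_Suc)

lemma psi_repr_neq: assumes "lam \<noteq> mu"
  shows "(\<lambda>\<omega>. psi (D k \<omega>) (C (Suc k) \<omega>)) = (\<lambda>\<omega>. mu ^ n / (mu - lam) ^ n *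
     (\<Sum>i<n. (mu - lam) ^ i / fact i * (exp (- lam * C (Suc k) \<omega>) * Uf i k \<omega> - Uf i (Suc k) \<omega>)))"
  unfolding psi_def Uf_def using assms by (simp add: fun_eq_iff D_Suc)

lemma psi_repr_eq: assumes "lam = mu"
  shows "(\<lambda>\<omega>. psi (D k \<omega>) (C (Suc k) \<omega>)) = (\<lambda>\<omega>. mu ^ n / fact n *
     (Uf n (Suc k) \<omega> - exp (- lam * C (Suc k) \<omega>) * Uf n k \<omega>))"
  unfolding psi_def Uf_def using assms by (simp add: fun_eq_iff D_Suc)

lemma psi_int: "integrable M (\<lambda>\<omega>. psi (D k \<omega>) (C (Suc k) \<omega>))"
proof (cases "lam = mu")
  case False
  show ?thesis unfolding psi_repr_neq[OF False]
    by (intro Bochner_Integration.integrable_mult_right Bochner_Integration.integrable_sum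
        Bochner_Integration.integrable_diff VU_int Uf_int) (use lam in auto)
next
  case True
  show ?thesis unfolding psi_repr_eq[OF True]
    by (intro Bochner_Integration.integrable_mult_right Bochner_Integration.integrable_sum
        Bochner_Integration.integrable_diff VU_int Uf_int) (use lam in auto)
qed

lemma E_psi_neq: assumes "lam \<noteq> mu"
  shows "expectation (\<lambda>\<omega>. psi (D k \<omega>) (C (Suc k) \<omega>)) =
    mu ^ n / (mu - lam) ^ n * (\<Sum>i<n. (mu - lam) ^ i / fact i * (LL lam * hr i k - hr i (Suc k)))"
proof -
  have int: "integrable M (\<lambda>\<omega>. (mu - lam) ^ i / fact i * (exp (- lam * C (Suc k) \<omega>) * Uf i k \<omega> - Uf i (Suc k) \<omega>))" for i
    by (intro Bochner_Integration.integrable_mult_right Bochner_Integration.integrable_diff VU_int Uf_int) (use lam in auto)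
  have "expectation (\<lambda>\<omega>. psi (D k \<omega>) (C (Suc k) \<omega>)) = mu ^ n / (mu - lam) ^ n *
     expectation (\<lambda>\<omega>. \<Sum>i<n. (mu - lam) ^ i / fact i * (exp (- lam * C (Suc k) \<omega>) * Uf i k \<omega> - Uf i (Suc k) \<omega>))"
    unfolding psi_repr_neq[OF assms] by (rule integral_mult_right_zero)
  also have "expectation (\<lambda>\<omega>. \<Sum>i<n. (mu - lam) ^ i / fact i * (exp (- lam * C (Suc k) \<omega>) * Uf i k \<omega> - Uf i (Suc k) \<omega>))
      = (\<Sum>i<n. expectation (\<lambda>\<omega>. (mu - lam) ^ i / fact i * (exp (- lam * C (Suc k) \<omega>) * Uf i k \<omega> - Uf i (Suc k) \<omega>)))"
    by (rule Bochner_Integration.integral_sum) (rule int)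
  also have "\<dots> = (\<Sum>i<n. (mu - lam) ^ i / fact i * (LL lam * hr i k - hr i (Suc k)))"
  proof (intro sum.cong refl)
    fix i
    have "expectation (\<lambda>\<omega>. (mu - lam) ^ i / fact i * (exp (- lam * C (Suc k) \<omega>) * Uf i k \<omega> - Uf i (Suc k) \<omega>))
        = (mu - lam) ^ i / fact i * expectation (\<lambda>\<omega>. exp (- lam * C (Suc k) \<omega>) * Uf i k \<omega> - Uf i (Suc k) \<omega>)"
      by (rule integral_mult_right_zero)
    also have "expectation (\<lambda>\<omega>. exp (- lam * C (Suc k) \<omega>) * Uf i k \<omega> - Uf i (Suc k) \<omega>)
        = expectation (\<lambda>\<omega>. exp (- lam * C (Suc k) \<omega>) * Uf i k \<omega>) - expectation (Uf i (Suc k))"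
      by (rule Bochner_Integration.integral_diff[OF VU_int Uf_int]) (use lam in auto)
    also have "\<dots> = LL lam * hr i k - hr i (Suc k)"
      using E_VU[of lam k i] lam by (simp add: hr_def)
    finally show "expectation (\<lambda>\<omega>. (mu - lam) ^ i / fact i * (exp (- lam * C (Suc k) \<omega>) * Uf i k \<omega> - Uf i (Suc k) \<omega>))
        = (mu - lam) ^ i / fact i * (LL lam * hr i k - hr i (Suc k))" .
  qed
  finally show ?thesis .
qed

lemma E_psi_eq: assumes "lam = mu"
  shows "expectation (\<lambda>\<omega>. psi (D k \<omega>) (C (Suc k) \<omega>)) = mu ^ n / fact n * (hr n (Suc k) - LL mu * hr n k)"
proof -
  have "expectation (\<lambda>\<omega>. psi (D k \<omega>) (C (Suc k) \<omega>)) = mu ^ n / fact n *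
     expectation (\<lambda>\<omega>. Uf n (Suc k) \<omega> - exp (- lam * C (Suc k) \<omega>) * Uf n k \<omega>)"
    unfolding psi_repr_eq[OF assms] by (rule integral_mult_right_zero)
  also have "expectation (\<lambda>\<omega>. Uf n (Suc k) \<omega> - exp (- lam * C (Suc k) \<omega>) * Uf n k \<omega>)
      = expectation (Uf n (Suc k)) - expectation (\<lambda>\<omega>. exp (- lam * C (Suc k) \<omega>) * Uf n k \<omega>)"
    by (rule Bochner_Integration.integral_diff[OF Uf_int VU_int]) (use lam in auto)
  also have "\<dots> = hr n (Suc k) - LL mu * hr n k"
    using E_VU[of lam k n] lam assms by (simp add: hr_def)
  finally show ?thesis .
qed

lemma psi_nonneg: "0 \<le> psi (D k \<omega>) (C (Suc k) \<omega>)"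
  using FTC_psi[OF D_nonneg Cpos] by blast

lemma prob_BB: "prob (BB k) = expectation (\<lambda>\<omega>. psi (D k \<omega>) (C (Suc k) \<omega>))"
proof -
  have "emeasure M (BB k) = ennreal (expectation (\<lambda>\<omega>. psi (D k \<omega>) (C (Suc k) \<omega>)))"
    unfolding emeasure_BB by (rule nn_integral_eq_integral[OF psi_int]) (simp add: psi_nonneg)
  moreover have "0 \<le> expectation (\<lambda>\<omega>. psi (D k \<omega>) (C (Suc k) \<omega>))"
    by (rule integral_nonneg_AE) (simp add: psi_nonneg)
  ultimately show ?thesis by (simp add: emeasure_eq_measure)
qed

end


lemma deriv_minus_const: "deriv (\<lambda>s. g s - c) = deriv (g :: real \<Rightarrow> real)"
proof (rule ext)
  fix x
  have "(\<lambda>D. ((\<lambda>s. g s - c) has_field_derivative D) (at x)) = (\<lambda>D. (g has_field_derivative D) (at x))"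
  proof (rule ext, rule iffI)
    fix D assume "((\<lambda>s. g s - c) has_field_derivative D) (at x)"
    from DERIV_add[OF this DERIV_const[of c]] show "(g has_field_derivative D) (at x)" by simp
  next
    fix D assume "(g has_field_derivative D) (at x)"
    from DERIV_diff[OF this DERIV_const[of c]] show "((\<lambda>s. g s - c) has_field_derivative D) (at x)" by simp
  qed
  thus "deriv (\<lambda>s. g s - c) x = deriv g x" by (simp add: deriv_def)
qed

context model begin

lemma Bbar_meas[measurable]: "(\<lambda>\<omega>. Bbar C (Y \<omega>) \<omega>) \<in> measurable M (count_space UNIV)"
  unfolding Bbar_def insp_time_def by measurable

definition Aset where "Aset = {\<omega> \<in> space M. insp_time C (Bbar C (Y \<omega>) \<omega>) \<omega> \<ge> Y \<omega> + Yd \<omega>}"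

lemma Aset_sets[measurable]: "Aset \<in> sets M"
proof -
  have "(\<lambda>\<omega>. insp_time C (Bbar C (Y \<omega>) \<omega>) \<omega>) \<in> borel_measurable M"
    by (rule measurable_compose_countable[where f="\<lambda>k \<omega>. insp_time C k \<omega>", OF _ Bbar_meas])
       (simp add: D_def[symmetric])
  thus ?thesis unfolding Aset_def by measurable
qed

lemma BB_disj: "disjoint_family BB"
unfolding disjoint_family_on_def
proof (intro ballI impI)
  fix j k :: nat assume "j \<noteq> k"
  show "BB j \<inter> BB k = {}"
  proof (rule ccontr)
    assume "BB j \<inter> BB k \<noteq> {}"
    then obtain \<omega> where "\<omega> \<in> BB j" "\<omega> \<in> BB k" by auto
    hence *: "D j \<omega> < Y \<omega>" "Y \<omega> \<le> D (Suc j) \<omega>" "D k \<omega> < Y \<omega>" "Y \<omega> \<le> D (Suc k) \<omega>"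
      by (auto simp: BB_def)
    show False
    proof (cases "j < k")
      case True
      hence "D (Suc j) \<omega> \<le> D k \<omega>" by (intro D_mono) auto
      with * show False by simp
    next
      case False
      hence "k < j" using \<open>j \<noteq> k\<close> by auto
      hence "D (Suc k) \<omega> \<le> D j \<omega>" by (intro D_mono) auto
      with * show False by simp
    qed
  qed
qed

lemma compl_AE: "AE \<omega> in M. (\<omega> \<in> space M - Aset) = (\<omega> \<in> (\<Union>k. BB k))"
  using AE_finite Y_pos_AE AE_space
proof eventually_elim
  case (elim \<omega>)
  then obtain k0 where k0: "Y \<omega> \<le> D k0 \<omega>" by auto
  define m where "m = Bbar C (Y \<omega>) \<omega>"
  have ch: "D j \<omega> < Y \<omega> \<longleftrightarrow> j < m" for j using Bbar_char[OF _ k0, of j] elim by (simp add: m_def)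
  have "0 < m" using ch[of 0] elim by simp
  then obtain k1 where m: "m = Suc k1" by (cases m) auto
  have "\<omega> \<in> BB k \<longleftrightarrow> k = k1 \<and> D m \<omega> < Y \<omega> + Yd \<omega>" for k
  proof -
    have "k = k1 \<longleftrightarrow> k < m \<and> \<not> Suc k < m" by (auto simp: m)
    thus ?thesis using ch[of k] ch[of "Suc k"] elim by (auto simp: BB_def m not_less)
  qed
  moreover have "\<omega> \<in> space M - Aset \<longleftrightarrow> D m \<omega> < Y \<omega> + Yd \<omega>"
    using elim by (auto simp: Aset_def m_def D_def not_le)
  ultimately show ?case by auto
qed

lemma BB_sums: "(\<lambda>k. prob (BB k)) sums (1 - prob Aset)"
proof -
  have "(\<lambda>k. prob (BB k)) sums prob (\<Union>k. BB k)"
    by (rule finite_measure_UNION[OF _ BB_disj]) auto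
  moreover have "prob (\<Union>k. BB k) = prob (space M - Aset)"
    using emeasure_eq_AE[OF compl_AE] by (simp add: measure_def)
  moreover have "prob (space M - Aset) = 1 - prob Aset" by (rule prob_compl) simp
  ultimately show ?thesis by simp
qed

definition FF :: "real \<Rightarrow> real" where "FF s = LL s / (1 - LL s)"

lemma deriv_FF: "(deriv ^^ i) FF mu = (if i = 0 then Hr 0 mu - 1 else (-1) ^ i * Hr i mu)"
proof -
  have ev: "\<forall>\<^sub>F s in nhds mu. FF s = 1 / (1 - LL s) - 1"
  proof -
    have "\<forall>\<^sub>F s in nhds mu. s \<in> {0<..}" by (rule eventually_nhds_in_open) (use mu in auto)
    thus ?thesis
    proof eventually_elim
      case (elim s) thus ?case using LL_less1[of s] by (simp add: FF_def field_simps)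
    qed
  qed
  have e: "(deriv ^^ i) FF mu = (deriv ^^ i) (\<lambda>s. 1 / (1 - LL s) - 1) mu"
    by (rule higher_deriv_cong_ev[OF ev refl])
  show ?thesis
  proof (cases i)
    case 0
    thus ?thesis using e Hr0[OF mu] by simp
  next
    case (Suc j)
    have "(deriv ^^ i) (\<lambda>s. 1 / (1 - LL s) - 1) mu = (deriv ^^ i) (\<lambda>s. 1 / (1 - LL s)) mu"
      unfolding Suc funpow_Suc_right comp_def deriv_minus_const ..
    thus ?thesis using e deriv_G[of i] Suc by simp
  qed
qed


lemma hr_Suc_sums: "(\<lambda>k. hr i (Suc k)) sums (Hr i mu - 0 ^ i)"
  using hr_sums[of i] by (subst sums_Suc_iff) (simp add: hr0)

theorem part2:
  "1 - prob Aset = (if lam \<noteq> mu then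
      mu ^ n / (mu - lam) ^ n *
        (LL lam - (1 - LL lam) *
          (\<Sum>i<n. (mu - lam) ^ i / fact i * (-1) ^ i * (deriv ^^ i) (\<lambda>s. LL s / (1 - LL s)) mu))
    else (1 - LL mu) * mu ^ n / fact n * (-1) ^ n * (deriv ^^ n) (\<lambda>s. LL s / (1 - LL s)) mu)"
proof -
  have FFe: "(\<lambda>s. LL s / (1 - LL s)) = FF" by (simp add: fun_eq_iff FF_def)
  show ?thesis
  proof (cases "lam = mu")
    case False
    define v where "v = mu - lam"
    define a where "a i = v ^ i / fact i" for i
    have "(\<lambda>k. prob (BB k)) sums (mu ^ n / v ^ n * (\<Sum>i<n. a i * (LL lam * Hr i mu - (Hr i mu - 0 ^ i))))"
    proof -
      have "(\<lambda>k. mu ^ n / v ^ n * (\<Sum>i<n. a i * (LL lam * hr i k - hr i (Suc k)))) sums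
            (mu ^ n / v ^ n * (\<Sum>i<n. a i * (LL lam * Hr i mu - (Hr i mu - 0 ^ i))))"
        by (intro sums_mult sums_sum sums_diff hr_sums hr_Suc_sums)
      moreover have "prob (BB k) = mu ^ n / v ^ n * (\<Sum>i<n. a i * (LL lam * hr i k - hr i (Suc k)))" for k
        using E_psi_neq[OF False, of k] by (simp add: prob_BB a_def v_def)
      ultimately show ?thesis by simp
    qed
    hence eq: "1 - prob Aset = mu ^ n / v ^ n * (\<Sum>i<n. a i * (LL lam * Hr i mu - (Hr i mu - 0 ^ i)))"
      using BB_sums sums_unique2 by blast
    have t: "a i * (-1) ^ i * (deriv ^^ i) FF mu = a i * (Hr i mu - 0 ^ i)" for i
    proof -
      have m1: "(-1::real) ^ i * (-1) ^ i = 1" by (simp add: power_mult_distrib[symmetric])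
      have "(-1) ^ i * (deriv ^^ i) FF mu = Hr i mu - 0 ^ i"
      proof (cases "i = 0")
        case True thus ?thesis using deriv_FF[of 0] by simp
      next
        case False
        hence "(-1) ^ i * (deriv ^^ i) FF mu = ((-1) ^ i * (-1) ^ i) * Hr i mu"
          using deriv_FF[of i] by simp
        thus ?thesis using False by (simp add: m1)
      qed
      thus ?thesis by (simp add: mult.assoc)
    qed
    have S0: "(\<Sum>i<n. a i * 0 ^ i) = 1"
    proof -
      have "(\<Sum>i<n. a i * 0 ^ i) = (\<Sum>i<n. if i = 0 then 1 else 0)"
        by (intro sum.cong refl) (simp add: a_def)
      also have "\<dots> = 1" using n1 by simp
      finally show ?thesis .
    qed
    define S1 where "S1 = (\<Sum>i<n. a i * Hr i mu)"
    have "(\<Sum>i<n. a i * (-1) ^ i * (deriv ^^ i) FF mu) = (\<Sum>i<n. a i * (Hr i mu - 0 ^ i))"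
      by (intro sum.cong refl t)
    also have "\<dots> = (\<Sum>i<n. a i * Hr i mu) - (\<Sum>i<n. a i * 0 ^ i)"
      by (simp add: right_diff_distrib sum_subtractf)
    finally have T0: "(\<Sum>i<n. a i * (-1) ^ i * (deriv ^^ i) FF mu) = S1 - 1"
      unfolding S0 S1_def .
    have T: "(\<Sum>i<n. (mu - lam) ^ i / fact i * (-1) ^ i * (deriv ^^ i) (\<lambda>s. LL s / (1 - LL s)) mu) = S1 - 1"
      using T0 unfolding FFe a_def v_def .
    have S2: "(\<Sum>i<n. a i * (LL lam * Hr i mu - (Hr i mu - 0 ^ i))) = (LL lam - 1) * S1 + 1"
    proof -
      have "(\<Sum>i<n. a i * (LL lam * Hr i mu - (Hr i mu - 0 ^ i))) = (\<Sum>i<n. (LL lam - 1) * (a i * Hr i mu) + a i * 0 ^ i)"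
        by (intro sum.cong refl) (simp add: algebra_simps)
      also have "\<dots> = (LL lam - 1) * (\<Sum>i<n. a i * Hr i mu) + (\<Sum>i<n. a i * 0 ^ i)"
        by (simp add: sum.distrib sum_distrib_left)
      finally show ?thesis unfolding S0 S1_def .
    qed
    have "1 - prob Aset = mu ^ n / (mu - lam) ^ n * ((LL lam - 1) * S1 + 1)"
      using eq unfolding S2 v_def .
    also have "\<dots> = mu ^ n / (mu - lam) ^ n * (LL lam - (1 - LL lam) * (S1 - 1))"
      by (simp add: algebra_simps)
    finally show ?thesis using False unfolding T by simp
  next
    case True
    have "(\<lambda>k. prob (BB k)) sums (mu ^ n / fact n * ((Hr n mu - 0 ^ n) - LL mu * Hr n mu))"
    proof -
      have "(\<lambda>k. mu ^ n / fact n * (hr n (Suc k) - LL mu * hr n k)) sums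
            (mu ^ n / fact n * ((Hr n mu - 0 ^ n) - LL mu * Hr n mu))"
        by (intro sums_mult sums_diff hr_sums hr_Suc_sums)
      moreover have "prob (BB k) = mu ^ n / fact n * (hr n (Suc k) - LL mu * hr n k)" for k
        using E_psi_eq[OF True, of k] by (simp add: prob_BB)
      ultimately show ?thesis by simp
    qed
    hence eq: "1 - prob Aset = mu ^ n / fact n * ((Hr n mu - 0 ^ n) - LL mu * Hr n mu)"
      using BB_sums sums_unique2 by blast
    have "(deriv ^^ n) FF mu = (-1) ^ n * Hr n mu" using n1 by (simp add: deriv_FF)
    hence d0: "(-1) ^ n * (deriv ^^ n) FF mu = Hr n mu" by (simp add: power_mult_distrib[symmetric])
    have d: "(-1) ^ n * (deriv ^^ n) (\<lambda>s. LL s / (1 - LL s)) mu = Hr n mu" unfolding FFe by (rule d0)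
    have z: "(0::real) ^ n = 0" using n1 by simp
    have eq': "1 - prob Aset = mu ^ n / fact n * (Hr n mu - LL mu * Hr n mu)" using eq unfolding z by simp
    have "(1 - LL mu) * mu ^ n / fact n * (-1) ^ n * (deriv ^^ n) (\<lambda>s. LL s / (1 - LL s)) mu
        = ((1 - LL mu) * mu ^ n / fact n) * ((-1) ^ n * (deriv ^^ n) (\<lambda>s. LL s / (1 - LL s)) mu)"
      by (simp only: mult.assoc)
    also have "\<dots> = (1 - LL mu) * mu ^ n / fact n * Hr n mu" unfolding d ..
    also have "\<dots> = 1 - prob Aset" unfolding eq' by (simp add: algebra_simps add_divide_distrib[symmetric])
    finally show ?thesis using True by simp
  qed
qed

end


lemma insp_meas:
  assumes "\<And>i. i \<ge> 1 \<Longrightarrow> C i \<in> borel_measurable M"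
  shows "insp_time C k \<in> borel_measurable M"
proof -
  have "insp_time C k = (\<lambda>\<omega>. \<Sum>i\<in>{1..k}. C i \<omega>)" by (simp add: fun_eq_iff insp_time_def)
  also have "\<dots> \<in> borel_measurable M"
    by (rule borel_measurable_sum) (use assms in auto)
  finally show ?thesis .
qed

lemma event_meas:
  assumes C: "\<And>i. i \<ge> 1 \<Longrightarrow> C i \<in> borel_measurable M"
    and Y[measurable]: "Y \<in> borel_measurable M" and Yd[measurable]: "Yd \<in> borel_measurable M"
  shows "{\<omega> \<in> space M. insp_time C (Bbar C (Y \<omega>) \<omega>) \<omega> \<ge> Y \<omega> + Yd \<omega>} \<in> sets M"
proof -
  note ins[measurable] = insp_meas[OF C]
  have B: "(\<lambda>\<omega>. Bbar C (Y \<omega>) \<omega>) \<in> measurable M (count_space UNIV)"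
    unfolding Bbar_def by measurable
  have "(\<lambda>\<omega>. insp_time C (Bbar C (Y \<omega>) \<omega>) \<omega>) \<in> borel_measurable M"
    by (rule measurable_compose_countable[where f="\<lambda>k \<omega>. insp_time C k \<omega>", OF _ B]) simp
  thus ?thesis by measurable
qed

theorem mainTheorem6:
  fixes M :: "'a measure"
    and n :: nat and mu lam :: real
    and Ys Yd :: "'a \<Rightarrow> real"
    and C :: "nat \<Rightarrow> 'a \<Rightarrow> real"
    and L :: "real \<Rightarrow> real"
  assumes "prob_space M"
    and "n \<ge> 1" and "mu > 0" and "lam > 0"
    and "distributed M lborel Ys (erlang_density (n - 1) mu)"
    and "distributed M lborel Yd (exponential_density lam)"
    and "\<And>i. i \<ge> 1 \<Longrightarrow> C i \<in> borel_measurable M"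
    and "\<And>i. i \<ge> 1 \<Longrightarrow> distr M borel (C i) = distr M borel (C 1)"
    and "prob_space.prob M {\<omega> \<in> space M. C 1 \<omega> > 0} = 1"
    and "integrable M (\<lambda>\<omega>. (C 1 \<omega>)\<^sup>2)"
    and "prob_space.indep_vars M (\<lambda>_. borel)
           (\<lambda>j. case j of Inl b \<Rightarrow> (if b then Ys else Yd) | Inr i \<Rightarrow> C i)
           (range Inl \<union> Inr ` {1..})"
    and L_def: "\<And>s. L s = prob_space.expectation M (\<lambda>\<omega>. exp (- s * C 1 \<omega>))"
  shows "(\<integral>\<^sup>+ \<omega>. ennreal (real (Bbar C (Ys \<omega>) \<omega>)) \<partial>M)
           = ennreal (\<Sum>i<n. mu ^ i / fact i * (-1) ^ i * (deriv ^^ i) (\<lambda>s. 1 / (1 - L s)) mu)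
         \<and> 1 - prob_space.prob M {\<omega> \<in> space M.
                insp_time C (Bbar C (Ys \<omega>) \<omega>) \<omega> \<ge> Ys \<omega> + Yd \<omega>}
           = (if lam \<noteq> mu then
              mu ^ n / (mu - lam) ^ n *
                (L lam - (1 - L lam) *
                  (\<Sum>i<n. (mu - lam) ^ i / fact i * (-1) ^ i
                           * (deriv ^^ i) (\<lambda>s. L s / (1 - L s)) mu))
            else (1 - L mu) * mu ^ n / fact n * (-1) ^ n
                   * (deriv ^^ n) (\<lambda>s. L s / (1 - L s)) mu)"
proof -
  interpret prob_space M by fact
  note Cm = assms(7)
  define g :: "real \<Rightarrow> real" where "g x = (if 0 < x then x else 1)" for x
  have g[measurable]: "g \<in> borel_measurable borel" unfolding g_def by measurable
  define C' where "C' i \<omega> = (if i = 0 then 1 else g (C i \<omega>))" for i \<omega>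
  have C'm: "C' i \<in> borel_measurable M" for i
  proof (cases "i = 0")
    case True
    hence "C' i = (\<lambda>\<omega>. 1)" by (simp add: fun_eq_iff C'_def)
    thus ?thesis by simp
  next
    case False
    hence "C' i = (\<lambda>\<omega>. g (C i \<omega>))" by (simp add: fun_eq_iff C'_def)
    moreover have "(\<lambda>\<omega>. g (C i \<omega>)) \<in> borel_measurable M"
      using measurable_compose[OF Cm g, of i] False by (simp add: comp_def)
    ultimately show ?thesis by simp
  qed
  have C'pos: "0 < C' i \<omega>" for i \<omega> by (simp add: C'_def g_def)
  have C'dist: "distr M borel (C' i) = distr M borel (C' 1)" if "i \<ge> 1" for i
  proof -
    have "distr M borel (C' j) = distr (distr M borel (C j)) borel g" if "j \<ge> 1" for j
    proof -
      have "C' j = g \<circ> C j" using that by (auto simp: C'_def fun_eq_iff)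
      thus ?thesis by (simp add: distr_distr[OF g Cm[OF that]])
    qed
    thus ?thesis using that assms(8)[OF that] by simp
  qed
  have ind': "indep_vars (\<lambda>_. borel) (\<lambda>j. case j of Inl b \<Rightarrow> (if b then Ys else Yd) | Inr i \<Rightarrow> C' i)
           (range Inl \<union> Inr ` {1..})"
  proof -
    have "indep_vars (\<lambda>_. borel) (\<lambda>j \<omega>. (case j of Inl b \<Rightarrow> id | Inr i \<Rightarrow> g)
          ((\<lambda>j. case j of Inl b \<Rightarrow> (if b then Ys else Yd) | Inr i \<Rightarrow> C i) j \<omega>)) (range Inl \<union> Inr ` {1..})"
      by (rule indep_vars_compose2[OF assms(11)]) (auto split: sum.split)
    thus ?thesis
      by (rule indep_vars_cong[THEN iffD1, rotated 3]) (auto simp: C'_def fun_eq_iff)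
  qed
  have ma: "model_axioms M n mu lam Ys Yd C'"
    unfolding model_axioms_def
  proof (intro conjI allI impI)
    show "n \<ge> 1" "mu > 0" "lam > 0" by (fact assms(2), fact assms(3), fact assms(4))
    show "distributed M lborel Ys (\<lambda>x. ennreal (erlang_density (n - 1) mu x))" by (rule assms(5))
    show "distributed M lborel Yd (\<lambda>x. ennreal (exponential_density lam x))" by (rule assms(6))
  qed (fact C'm C'pos C'dist ind')+
  interpret model M n mu lam Ys Yd C'
    by (rule model.intro[OF prob_space_axioms ma])
  have AEpos: "AE \<omega> in M. 0 < C i \<omega>" if "i \<ge> 1" for i
  proof -
    have "prob {\<omega> \<in> space M. C i \<omega> > 0} = measure (distr M borel (C i)) {0<..}"
      using Cm[OF that] by (subst measure_distr) (auto simp: vimage_def Int_def conj_commute)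
    also have "\<dots> = measure (distr M borel (C 1)) {0<..}" using assms(8)[OF that] by simp
    also have "\<dots> = prob {\<omega> \<in> space M. C 1 \<omega> > 0}"
      using Cm[of 1] by (subst measure_distr) (auto simp: vimage_def Int_def conj_commute)
    finally have "prob {\<omega> \<in> space M. C i \<omega> > 0} = 1" using assms(9) by simp
    hence "AE \<omega> in M. \<omega> \<in> {\<omega> \<in> space M. C i \<omega> > 0}"
      using Cm[OF that] by (subst (asm) prob_eq_1) auto
    thus ?thesis by auto
  qed
  have AEall: "AE \<omega> in M. \<forall>i. C' i \<omega> = (if i = 0 then 1 else C i \<omega>)"
  proof -
    have "AE \<omega> in M. C' i \<omega> = (if i = 0 then 1 else C i \<omega>)" for i
      using AEpos[of i] by (cases "i = 0") (auto simp: C'_def g_def)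
    thus ?thesis by (simp add: AE_all_countable)
  qed
  have AEeq: "AE \<omega> in M. (\<forall>k. insp_time C k \<omega> = insp_time C' k \<omega>) \<and> (\<forall>t. Bbar C t \<omega> = Bbar C' t \<omega>)"
    using AEall
  proof eventually_elim
    case (elim \<omega>)
    have i: "insp_time C k \<omega> = insp_time C' k \<omega>" for k
      unfolding insp_time_def by (intro sum.cong refl) (use elim in auto)
    show ?case using i by (simp add: Bbar_def)
  qed
  have Leq: "L = LL"
  proof
    fix s
    have "AE \<omega> in M. exp (- s * C 1 \<omega>) = exp (- s * C' 1 \<omega>)"
      using AEall by eventually_elim simp
    moreover have C1m[measurable]: "C 1 \<in> borel_measurable M" by (rule Cm) simp
    ultimately show "L s = LL s" unfolding L_def LL_def by (intro integral_cong_AE) measurable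
  qed
  have P1: "(\<integral>\<^sup>+ \<omega>. ennreal (real (Bbar C (Ys \<omega>) \<omega>)) \<partial>M) = (\<integral>\<^sup>+ \<omega>. ennreal (real (Bbar C' (Ys \<omega>) \<omega>)) \<partial>M)"
    by (rule nn_integral_cong_AE) (use AEeq in \<open>eventually_elim, simp\<close>)
  have P2: "prob {\<omega> \<in> space M. insp_time C (Bbar C (Ys \<omega>) \<omega>) \<omega> \<ge> Ys \<omega> + Yd \<omega>} = prob Aset"
  proof -
    have "emeasure M {\<omega> \<in> space M. insp_time C (Bbar C (Ys \<omega>) \<omega>) \<omega> \<ge> Ys \<omega> + Yd \<omega>} = emeasure M Aset"
    proof (rule emeasure_eq_AE)
      show "AE \<omega> in M. (\<omega> \<in> {\<omega> \<in> space M. insp_time C (Bbar C (Ys \<omega>) \<omega>) \<omega> \<ge> Ys \<omega> + Yd \<omega>}) = (\<omega> \<in> Aset)"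
        using AEeq by eventually_elim (simp add: Aset_def)
      show "{\<omega> \<in> space M. insp_time C (Bbar C (Ys \<omega>) \<omega>) \<omega> \<ge> Ys \<omega> + Yd \<omega>} \<in> sets M"
        by (rule event_meas[OF Cm]) measurable
    qed simp
    thus ?thesis by (simp add: measure_def)
  qed
  show ?thesis unfolding P1 P2 Leq using part1 part2 by simp
qed


end
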